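(* Let $N\geq5$ and let $(M,g)$ be an $N$-dimensional Riemannian model with pole $o$ and metric $ds^2=dr^2+\psi^2(r)\,d\omega^2$, where $\psi$ is a $C^\infty$ nonnegative function on $[0,+\infty)$, positive on $(0,+\infty)$, with $\psi'(0)=1$, $\psi^{(2k)}(0)=0$ for all $k\geq0$, and such that for all $r>0$: $K_{\pi,r}^{rad}\leq -1$ and $K_{\pi,r}^{rad}\geq H_{\pi,r}^{tan}$. Then for all $u\in C_c^\infty(M)$, $$\int_M(\Delta_{r,g}u)^2dv_g-\Big(\frac{N-1}{2}\Big)^4\int_Mu^2dv_g\geq\frac{(N-1)^2}{16}\int_M\frac{u^2}{r^2}dv_g+\frac{(N-1)^3(N-3)}{16}\int_M\frac{u^2}{\psi^2}dv_g+\frac14\int_M\frac1{r^2}\Big(\frac{\partial u}{\partial r}\Big)^2dv_g+\frac{N^2-1}{4}\int_M\frac1{\psi^2}\Big(\frac{\partial u}{\partial r}\Big)^2dv_g.$$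
   Context: $d\omega^2$ is the standard metric on $\mathbb{S}^{N-1}$, $r$ the geodesic distance from $o$, $\frac{\partial u}{\partial r}$ the radial derivative, $dv_g$ the Riemannian volume, $\Delta_{r,g}u=\frac{\partial^2u}{\partial r^2}+(N-1)\frac{\psi'}{\psi}\frac{\partial u}{\partial r}$, $K_{\pi,r}^{rad}=-\frac{\psi''}{\psi}$, $H_{\pi,r}^{tan}=-\frac{(\psi')^2-1}{\psi^2}$. *)

theory Defs
  imports "HOL-Analysis.Analysis"
begin

coinductive cinf :: "(real^'n \<Rightarrow> real) \<Rightarrow> bool" where
  "f differentiable_on UNIV \<Longrightarrow>
   (\<And>i. cinf (\<lambda>x. frechet_derivative f (at x) (axis i 1))) \<Longrightarrow> cinf f"

definition cinf_c :: "(real^'n \<Rightarrow> real) \<Rightarrow> bool" where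
  "cinf_c u \<longleftrightarrow> cinf u \<and> compact (closure {x. u x \<noteq> 0})"

text \<open>psi is C-infinity on [0,+oo) with k-th derivative dpsi k
  (one-sided derivative at 0).\<close>
definition smooth_halfline :: "(nat \<Rightarrow> real \<Rightarrow> real) \<Rightarrow> bool" where
  "smooth_halfline dpsi \<longleftrightarrow>
     (\<forall>k. \<forall>r\<ge>0. (dpsi k has_real_derivative dpsi (Suc k) r) (at r within {0..}))"

text \<open>The model (M,g) is identified with R^N through normal (polar) coordinates
  at the pole o: x = r * omega, r = norm x = geodesic distance to o.\<close>

definition rad_d1 :: "(real^'n \<Rightarrow> real) \<Rightarrow> real^'n \<Rightarrow> real" where
  "rad_d1 u x = deriv (\<lambda>t. u (t *\<^sub>R sgn x)) (norm x)"

definition rad_d2 :: "(real^'n \<Rightarrow> real) \<Rightarrow> real^'n \<Rightarrow> real" where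
  "rad_d2 u x = deriv (deriv (\<lambda>t. u (t *\<^sub>R sgn x))) (norm x)"

definition rad_lap :: "(nat \<Rightarrow> real \<Rightarrow> real) \<Rightarrow> (real^'n \<Rightarrow> real) \<Rightarrow> real^'n \<Rightarrow> real" where
  "rad_lap dpsi u x = rad_d2 u x
     + (real CARD('n) - 1) * dpsi 1 (norm x) / dpsi 0 (norm x) * rad_d1 u x"

text \<open>Integral against the Riemannian volume dv_g = psi(r)^(N-1) dr d omega,
  which in normal coordinates is (psi(|x|)/|x|)^(N-1) dx.\<close>
definition int_g :: "(nat \<Rightarrow> real \<Rightarrow> real) \<Rightarrow> (real^'n \<Rightarrow> real) \<Rightarrow> real" where
  "int_g dpsi F = (\<integral>x. F x * (dpsi 0 (norm x) / norm x) ^ (CARD('n) - 1) \<partial>lborel)"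

end

theory Submission
  imports Defs
begin

lemma scale_integral:
  fixes f :: "real^'n \<Rightarrow> real" and c :: real
  assumes c: "c > 0" and f[measurable]: "f \<in> borel_measurable borel"
  shows "integrable lborel (\<lambda>x. f (c *\<^sub>R x)) \<longleftrightarrow> integrable lborel f"
    and "(\<integral>x. f (c *\<^sub>R x) \<partial>lborel) = (\<integral>x. f x \<partial>lborel) / c ^ CARD('n)"
proof -
  have L: "lborel = density (distr lborel borel (\<lambda>x::real^'n. 0 + c *\<^sub>R x)) (\<lambda>_. \<bar>c\<bar>^DIM(real^'n))"
    using lborel_affine[of c "0::real^'n"] c by simp
  have m: "(\<lambda>x::real^'n. 0 + c *\<^sub>R x) \<in> measurable lborel borel" by simp
  have "integrable lborel f \<longleftrightarrow> integrable (density (distr lborel borel (\<lambda>x::real^'n. 0 + c *\<^sub>R x)) (\<lambda>_. \<bar>c\<bar>^DIM(real^'n))) f"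
    using L by simp
  also have "\<dots> \<longleftrightarrow> integrable (distr lborel borel (\<lambda>x. 0 + c *\<^sub>R x)) (\<lambda>x. (\<bar>c\<bar>^DIM(real^'n)) *\<^sub>R f x)"
    by (subst integrable_density[symmetric]) (auto simp: ennreal_power)
  also have "\<dots> \<longleftrightarrow> integrable lborel (\<lambda>x. (\<bar>c\<bar>^DIM(real^'n)) *\<^sub>R f (0 + c *\<^sub>R x))"
    by (rule integrable_distr_eq[OF m]) simp
  also have "\<dots> \<longleftrightarrow> integrable lborel (\<lambda>x. f (c *\<^sub>R x))"
    using c by simp
  finally show "integrable lborel (\<lambda>x. f (c *\<^sub>R x)) \<longleftrightarrow> integrable lborel f" by simp
  have "(\<integral>x. f x \<partial>lborel) = (\<integral>x. f x \<partial>(density (distr lborel borel (\<lambda>x::real^'n. 0 + c *\<^sub>R x)) (\<lambda>_. \<bar>c\<bar>^DIM(real^'n))))"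
    using L by simp
  also have "\<dots> = (\<integral>x. (\<bar>c\<bar>^DIM(real^'n)) *\<^sub>R f x \<partial>(distr lborel borel (\<lambda>x. 0 + c *\<^sub>R x)))"
    by (subst integral_density[symmetric]) (auto simp: ennreal_power)
  also have "\<dots> = (\<integral>x. (\<bar>c\<bar>^DIM(real^'n)) *\<^sub>R f (0 + c *\<^sub>R x) \<partial>lborel)"
    by (rule integral_distr[OF m]) simp
  also have "\<dots> = c ^ CARD('n) * (\<integral>x. f (c *\<^sub>R x) \<partial>lborel)"
    using c by simp
  finally show "(\<integral>x. f (c *\<^sub>R x) \<partial>lborel) = (\<integral>x. f x \<partial>lborel) / c ^ CARD('n)"
    using c by (simp add: field_simps)
qed

lemma dyadic_shell:
  fixes t R :: real assumes "t > 0" "t \<le> R"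
  shows "\<exists>k::nat. R / 2^(k+1) < t \<and> t \<le> R / 2^k"
proof -
  define P where "P = (\<lambda>k::nat. R / 2^(k+1) < t)"
  have "\<exists>k. P k"
  proof -
    obtain k where "R / t < 2^k" using real_arch_pow[of 2 "R/t"] by auto
    then have "R < t * 2^k" using assms by (simp add: field_simps)
    then have "R / 2^(k+1) < t" using assms by (simp add: field_simps)
    then show ?thesis unfolding P_def by blast
  qed
  define k0 where "k0 = (LEAST k. P k)"
  have P0: "P k0" unfolding k0_def by (rule LeastI_ex) fact
  have "t \<le> R / 2^k0"
  proof (cases k0)
    case 0 then show ?thesis using assms by simp
  next
    case (Suc j)
    then have "\<not> P j" using not_less_Least[of j P] unfolding k0_def by auto
    then show ?thesis unfolding P_def using Suc by simp
  qed
  then show ?thesis using P0 unfolding P_def by blast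
qed

lemma inv_sq_integrable:
  fixes f :: "real^'n \<Rightarrow> real"
  assumes N: "CARD('n) \<ge> 3" and fm[measurable]: "f \<in> borel_measurable borel" and R: "R > 0"
    and bound: "\<And>y. y \<noteq> 0 \<Longrightarrow> norm y \<le> R \<Longrightarrow> \<bar>f y\<bar> \<le> C / (norm y)^2"
    and supp: "\<And>y. norm y > R \<Longrightarrow> f y = 0"
  shows "integrable lborel f"
proof -
  define C' where "C' = \<bar>C\<bar>"
  define h where "h = (\<lambda>(k::nat) (y::real^'n). (C' * 4^(k+1) / R^2) * indicator (cball 0 (R/2^k)) y)"
  define V where "V = unit_ball_vol (real CARD('n))"
  have hint: "integrable lborel (h k)" for k
    unfolding h_def by (intro integrable_mult_right integrable_real_indicator) (use emeasure_bounded_finite[OF bounded_cball[of "0::real^'n"]] in \<open>auto simp: less_top\<close>)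
  have mc: "measure lborel (cball (0::real^'n) r) = V * r ^ CARD('n)" if "r \<ge> 0" for r
    using content_cball[where c="0::real^'n" and r=r] that unfolding V_def by simp
  have nh: "(\<integral>y. norm (h k y) \<partial>lborel) = 4 * C' * R^(CARD('n) - 2) * V * (4 / 2^CARD('n))^k" for k
  proof -
    have "(\<integral>y. norm (h k y) \<partial>lborel) = (\<integral>y. (C' * 4^(k+1) / R^2) * indicator (cball (0::real^'n) (R/2^k)) y \<partial>lborel)"
      unfolding h_def C'_def by (intro Bochner_Integration.integral_cong) (auto simp: indicator_def)
    also have "\<dots> = (C' * 4^(k+1) / R^2) * measure lborel (cball (0::real^'n) (R/2^k))"
      by (subst integral_mult_right_zero) (simp add: emeasure_cball)
    also have "\<dots> = (C' * 4^(k+1) / R^2) * (V * (R/2^k) ^ CARD('n))"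
      using R by (subst mc) auto
    also have "\<dots> = 4 * C' * R^(CARD('n) - 2) * V * (4 / 2^CARD('n))^k"
    proof -
      have cc: "CARD('n) = 2 + (CARD('n) - 2)" using N by simp
      have e: "R ^ CARD('n) = R^2 * R^(CARD('n) - 2)" by (subst cc) (simp only: power_add)
      have p1: "(R/2^k) ^ CARD('n) = R ^ CARD('n) / (2^CARD('n))^k"
        by (simp add: power_divide power_mult[symmetric] mult.commute)
      have p2: "(4::real)^(k+1) = 4 * 4^k" by simp
      have p3: "(4 / 2^CARD('n))^k = (4::real)^k / (2^CARD('n))^k" by (simp add: power_divide)
      show ?thesis unfolding p1 p2 p3 e using R by (simp add: field_simps)
    qed
    finally show ?thesis .
  qed
  have sumN: "summable (\<lambda>k. (\<integral>y. norm (h k y) \<partial>lborel))"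
  proof -
    have "(4::real) / 2^CARD('n) < 1"
    proof -
      have "(2::real)^3 \<le> 2^CARD('n)" using N by (intro power_increasing) auto
      then show ?thesis by simp
    qed
    then have "summable (\<lambda>k. ((4::real) / 2^CARD('n))^k)" by (intro summable_geometric) simp
    then show ?thesis unfolding nh by (intro summable_mult)
  qed
  have AEsum: "AE y in lborel. summable (\<lambda>k. norm (h k y)) \<and> \<bar>f y\<bar> \<le> (\<Sum>k. h k y)"
    using AE_lborel_singleton[of "0::real^'n"]
  proof eventually_elim
    case (elim y)
    then have ny: "norm y > 0" by simp
    obtain K where K: "R / 2^K < norm y"
    proof -
      obtain K where "R / norm y < 2^K" using real_arch_pow[of 2 "R / norm y"] by auto
      then have "R / 2^K < norm y" using ny by (simp add: field_simps)
      then show ?thesis using that by blast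
    qed
    have zero: "h k y = 0" if "k \<notin> {..<K}" for k
    proof -
      have "(2::real)^K \<le> 2^k" using that by (intro power_increasing) auto
      then have "R / 2^k \<le> R / 2^K" using R by (intro divide_left_mono) auto
      then show ?thesis unfolding h_def using K by (auto simp: indicator_def)
    qed
    have sh: "summable (\<lambda>k. h k y)" by (rule summable_finite[of "{..<K}"]) (use zero in auto)
    have hnn: "h k y \<ge> 0" for k unfolding h_def C'_def using R by (auto simp: indicator_def)
    have sn: "summable (\<lambda>k. norm (h k y))" using sh hnn by simp
    have "\<bar>f y\<bar> \<le> (\<Sum>k. h k y)"
    proof (cases "norm y > R")
      case True then show ?thesis using supp[OF True] sh hnn by (simp add: suminf_nonneg)
    next
      case False
      then obtain k where k: "R / 2^(k+1) < norm y" "norm y \<le> R / 2^k"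
        using dyadic_shell[of "norm y" R] ny by auto
      have "\<bar>f y\<bar> \<le> C / (norm y)^2" using bound[of y] False elim by auto
      also have "\<dots> \<le> C' / (norm y)^2" unfolding C'_def by (simp add: divide_right_mono)
      also have "\<dots> \<le> C' * 4^(k+1) / R^2"
      proof -
        have "(R / 2^(k+1))^2 \<le> (norm y)^2" using k R by (intro power_mono) auto
        moreover have "(R / 2^(k+1))^2 = R^2 / 4^(k+1)"
          by (simp add: power_divide power_mult[symmetric] mult.commute) (metis power_mult power_mult_distrib power2_eq_square mult_2_right numeral_Bit0 power_commutes)
        ultimately have "R^2 / 4^(k+1) \<le> (norm y)^2" by simp
        then have "1 / (norm y)^2 \<le> 4^(k+1) / R^2" using R ny by (simp add: field_simps)
        then show ?thesis unfolding C'_def by (metis abs_ge_zero mult_left_mono times_divide_eq_right mult.right_neutral)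
      qed
      also have "\<dots> = h k y" unfolding h_def using k by (simp add: indicator_def)
      also have "\<dots> \<le> (\<Sum>k. h k y)" using sum_le_suminf[OF sh, of "{k}"] hnn by auto
      finally show ?thesis .
    qed
    then show ?case using sn by simp
  qed
  have int: "integrable lborel (\<lambda>y. \<Sum>k. h k y)"
    by (rule integrable_suminf) (use hint AEsum sumN in auto)
  show ?thesis
    proof (rule Bochner_Integration.integrable_bound[OF int])
    show "f \<in> borel_measurable lborel" by simp
    show "AE x in lborel. norm (f x) \<le> norm (\<Sum>k. h k x)"
      using AEsum by eventually_elim auto
  qed
qed

lemma pow_ratio:
  fixes t :: real assumes "t > 0" "a + k = b"
  shows "t ^ a / t ^ b = 1 / t ^ k"
  using assms by (simp add: power_add[symmetric] field_simps)

lemma aux_quot: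
  fixes l t A B :: real assumes "l > 1" "t > 0"
  shows "(l^N * (A/(l*t)^N) - B/t^N)/(l-1) = (A - B)/(t*(l-1)) * (t/t^N)"
  using assms by (simp add: power_mult_distrib field_simps)

lemma ray_div_zero:
  fixes G D :: "real^'n \<Rightarrow> real"
  assumes N: "CARD('n) \<ge> 3" and R: "R > 0" and C: "C \<ge> 0"
    and Gm[measurable]: "G \<in> borel_measurable borel" and Dm[measurable]: "D \<in> borel_measurable borel"
    and der: "\<And>y t. y \<noteq> 0 \<Longrightarrow> t > 0 \<Longrightarrow> ((\<lambda>s. G (s *\<^sub>R sgn y)) has_real_derivative D (t *\<^sub>R sgn y)) (at t)"
    and Gb: "\<And>y. y \<noteq> 0 \<Longrightarrow> \<bar>G y\<bar> \<le> C * norm y ^ (CARD('n) - 2)"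
    and Db: "\<And>y. y \<noteq> 0 \<Longrightarrow> \<bar>D y\<bar> \<le> C * norm y ^ (CARD('n) - 3)"
    and supp: "\<And>y. norm y > R \<Longrightarrow> G y = 0 \<and> D y = 0"
  shows "integrable lborel (\<lambda>y. D y / norm y ^ (CARD('n) - 1))"
    and "(\<integral>y. D y / norm y ^ (CARD('n) - 1) \<partial>lborel) = 0"
proof -
  define N where "N = CARD('n)"
  define Q where "Q = (\<lambda>y. G y / norm y ^ N)"
  define E where "E = (\<lambda>y. D y / norm y ^ (N - 1))"
  have [measurable]: "Q \<in> borel_measurable borel" "E \<in> borel_measurable borel"
    unfolding Q_def E_def by auto
  have Qint: "integrable lborel Q"
  proof (rule inv_sq_integrable[OF N _ R])
    show "Q \<in> borel_measurable borel" by simp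
    fix y :: "real^'n" 
    show "norm y > R \<Longrightarrow> Q y = 0" unfolding Q_def using supp by simp
    assume y: "y \<noteq> 0" "norm y \<le> R"
    have "\<bar>Q y\<bar> \<le> C * norm y ^ (N - 2) / norm y ^ N"
      unfolding Q_def using Gb[OF y(1)] y by (simp add: abs_div N_def divide_right_mono)
    also have "\<dots> = C / (norm y)^2"
    proof -
      have r: "norm y ^ (N-2) / norm y ^ N = 1/(norm y)^2" by (rule pow_ratio) (use y N in \<open>auto simp: N_def\<close>)
      show ?thesis using r by (metis times_divide_eq_right mult.right_neutral)
    qed
    finally show "\<bar>Q y\<bar> \<le> C / (norm y)^2" .
  qed
  show Eint: "integrable lborel (\<lambda>y. D y / norm y ^ (CARD('n) - 1))"
  proof (rule inv_sq_integrable[OF N _ R])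
    show "(\<lambda>y. D y / norm y ^ (CARD('n) - 1)) \<in> borel_measurable borel" by simp
    fix y :: "real^'n" 
    show "norm y > R \<Longrightarrow> D y / norm y ^ (CARD('n) - 1) = 0" using supp by simp
    assume y: "y \<noteq> 0" "norm y \<le> R"
    have "\<bar>D y / norm y ^ (CARD('n) - 1)\<bar> \<le> C * norm y ^ (N - 3) / norm y ^ (N - 1)"
      using Db[OF y(1)] y by (simp add: abs_div N_def divide_right_mono)
    also have "\<dots> = C / (norm y)^2"
    proof -
      have r: "norm y ^ (N-3) / norm y ^ (N-1) = 1/(norm y)^2" by (rule pow_ratio) (use y N in \<open>auto simp: N_def\<close>)
      show ?thesis using r by (metis times_divide_eq_right mult.right_neutral)
    qed
    finally show "\<bar>D y / norm y ^ (CARD('n) - 1)\<bar> \<le> C / (norm y)^2" .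
  qed
  define lam where "lam = (\<lambda>k::nat. 1 + inverse (real (Suc k)))"
  have lam1: "lam k > 1" "lam k \<le> 2" for k unfolding lam_def by (auto simp: inverse_le_1_iff)
  define s where "s = (\<lambda>k y. (lam k ^ N * Q (lam k *\<^sub>R y) - Q y) / (lam k - 1))"
  have [measurable]: "s k \<in> borel_measurable borel" for k unfolding s_def by simp
  have s0: "(\<integral>y. s k y \<partial>lborel) = 0" for k
  proof -
    have i1: "integrable lborel (\<lambda>y. Q (lam k *\<^sub>R y))"
      using scale_integral(1)[of "lam k" Q] lam1[of k] Qint by simp
    have "(\<integral>y. s k y \<partial>lborel) = (lam k ^ N * (\<integral>y. Q (lam k *\<^sub>R y) \<partial>lborel) - (\<integral>y. Q y \<partial>lborel)) / (lam k - 1)"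
      unfolding s_def using i1 Qint by simp
    also have "\<dots> = 0" using scale_integral(2)[of "lam k" Q] lam1[of k] unfolding N_def by simp
    finally show ?thesis .
  qed
  define w where "w = (\<lambda>y::real^'n. (C * 2^(N-3)) * indicator (cball 0 R) y / (norm y)^2)"
  have [measurable]: "cball (0::real^'n) R \<in> sets borel" by (rule borel_closed[OF closed_cball])
  have [measurable]: "w \<in> borel_measurable borel" unfolding w_def by measurable
  have wint: "integrable lborel w"
  proof (rule inv_sq_integrable[OF N _ R])
    show "w \<in> borel_measurable borel" by simp
    fix y :: "real^'n"
    show "norm y > R \<Longrightarrow> w y = 0" unfolding w_def by (simp add: indicator_def)
    show "y \<noteq> 0 \<Longrightarrow> norm y \<le> R \<Longrightarrow> \<bar>w y\<bar> \<le> (C * 2^(N-3)) / (norm y)^2"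
      unfolding w_def using C by (simp add: indicator_def abs_mult)
  qed
  have key: "(\<lambda>k. s k y) \<longlonglongrightarrow> E y \<and> (\<forall>k. norm (s k y) \<le> w y)" if y: "y \<noteq> 0" for y
  proof -
    define t where "t = norm y"
    define e where "e = sgn y"
    have t: "t > 0" using y unfolding t_def by simp
    have ye: "y = t *\<^sub>R e" unfolding t_def e_def using y by (simp add: sgn_div_norm)
    have ne: "norm e = 1" unfolding e_def using y by (simp add: norm_sgn)
    define g where "g = (\<lambda>z. G (z *\<^sub>R e))"
    have gd: "(g has_real_derivative D (z *\<^sub>R e)) (at z)" if "z > 0" for z
      unfolding g_def e_def using der[OF y that] .
    have sk: "s k y = (g (t + t * inverse (real (Suc k))) - g t) / (t * inverse (real (Suc k))) * (t / t ^ N)" for k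
    proof -
      have l: "lam k > 1" using lam1 by simp
      have h_eq: "t * inverse (real (Suc k)) = t * (lam k - 1)" by (simp add: lam_def)
      have nl: "norm (lam k *\<^sub>R y) = lam k * t" unfolding t_def using l by simp
      have ly: "lam k *\<^sub>R y = (t + t * inverse (real (Suc k))) *\<^sub>R e"
        unfolding ye lam_def by (simp add: algebra_simps)
      have Q1: "Q (lam k *\<^sub>R y) = g (t + t * inverse (real (Suc k))) / (lam k * t) ^ N"
        unfolding Q_def g_def using nl ly by simp
      have Q2: "Q y = g t / t ^ N" unfolding Q_def g_def t_def[symmetric] using ye by simp
      show ?thesis unfolding s_def Q1 Q2 h_eq by (rule aux_quot[OF l t])
    qed
    have lim1: "((\<lambda>h. (g (t + h) - g t) / h) \<longlongrightarrow> D y) (at 0)"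
      using gd[OF t] ye by (simp add: DERIV_def)
    have hl: "filterlim (\<lambda>k. t * inverse (real (Suc k))) (at 0) sequentially"
    proof (rule filterlim_atI)
      show "((\<lambda>k. t * inverse (real (Suc k))) \<longlongrightarrow> 0) sequentially"
        using tendsto_mult_right_zero[OF LIMSEQ_inverse_real_of_nat, of t] by simp
      show "\<forall>\<^sub>F k in sequentially. t * inverse (real (Suc k)) \<noteq> 0" using t by simp
    qed
    have "(\<lambda>k. (g (t + t * inverse (real (Suc k))) - g t) / (t * inverse (real (Suc k)))) \<longlonglongrightarrow> D y"
      by (rule filterlim_compose[OF lim1 hl])
    then have "(\<lambda>k. s k y) \<longlonglongrightarrow> D y * (t / t ^ N)"
      unfolding sk by (intro tendsto_mult tendsto_const)
    moreover have "D y * (t / t ^ N) = E y"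
      unfolding E_def t_def[symmetric] using pow_ratio[of t 1 "N-1" N] t N unfolding N_def by simp
    ultimately have L: "(\<lambda>k. s k y) \<longlonglongrightarrow> E y" by simp
    have B: "norm (s k y) \<le> w y" for k
    proof (cases "t > R")
      case True
      have "t \<le> lam k * t" using lam1[of k] t by simp
      then have "G (lam k *\<^sub>R y) = 0" using supp[of "lam k *\<^sub>R y"] True lam1[of k] t
        unfolding t_def by auto
      moreover have "G y = 0" using supp True unfolding t_def by auto
      ultimately show ?thesis unfolding s_def Q_def w_def using True C by (simp add: indicator_def t_def)
    next
      case False
      define h where "h = t * inverse (real (Suc k))"
      have h: "h > 0" "h \<le> t" unfolding h_def using t by (auto simp: field_simps)
      obtain z where z: "t < z" "z < t + h" "g (t + h) - g t = h * D (z *\<^sub>R e)"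
        using MVT2[of t "t + h" g "\<lambda>z. D (z *\<^sub>R e)"] gd t h by force
      have zb: "\<bar>D (z *\<^sub>R e)\<bar> \<le> C * (2 * t) ^ (N - 3)"
      proof -
        have "\<bar>D (z *\<^sub>R e)\<bar> \<le> C * norm (z *\<^sub>R e) ^ (CARD('n) - 3)"
        proof -
          have ez: "e \<noteq> 0" using ne by auto
          have "z *\<^sub>R e \<noteq> 0" using z t ez by simp
          from Db[OF this] show ?thesis by simp
        qed
        also have "\<dots> \<le> C * (2 * t) ^ (N - 3)"
          using z t h ne C unfolding N_def by (intro mult_left_mono power_mono) auto
        finally show ?thesis .
      qed
      have "norm (s k y) = \<bar>D (z *\<^sub>R e)\<bar> * (t / t ^ N)"
        unfolding sk h_def[symmetric] using z h t by (simp add: abs_mult)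
      also have "\<dots> \<le> C * (2 * t) ^ (N - 3) * (t / t ^ N)"
        using zb t by (intro mult_right_mono) auto
      also have "\<dots> = (C * 2^(N-3)) / t^2"
      proof -
        have n2: "N - 2 = Suc (N - 3)" using N unfolding N_def by simp
        have "t ^ (N - 3) * t = t ^ (N - 2)" unfolding n2 by simp
        moreover have "t ^ (N - 2) / t ^ N = 1 / t^2" by (rule pow_ratio) (use t N in \<open>auto simp: N_def\<close>)
        ultimately have r: "t ^ (N - 3) * t / t ^ N = 1 / t^2" by simp
        have "C * (2 * t) ^ (N - 3) * (t / t ^ N) = C * 2^(N-3) * (t ^ (N - 3) * t / t ^ N)"
          by (simp add: power_mult_distrib)
        then show ?thesis unfolding r by simp
      qed
      also have "\<dots> = w y" unfolding w_def t_def using False t_def by (simp add: indicator_def)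
      finally show ?thesis .
    qed
    show ?thesis using L B by blast
  qed
  have conv: "(\<lambda>k. \<integral>y. s k y \<partial>lborel) \<longlonglongrightarrow> (\<integral>y. E y \<partial>lborel)"
  proof (rule integral_dominated_convergence[OF _ _ wint])
    show "E \<in> borel_measurable lborel" by simp
    show "s k \<in> borel_measurable lborel" for k by simp
    show "AE y in lborel. (\<lambda>k. s k y) \<longlonglongrightarrow> E y"
      using AE_lborel_singleton[of "0::real^'n"] by eventually_elim (use key in auto)
    show "AE y in lborel. norm (s k y) \<le> w y" for k
      using AE_lborel_singleton[of "0::real^'n"] by eventually_elim (use key in auto)
  qed
  then show "(\<integral>y. D y / norm y ^ (CARD('n) - 1) \<partial>lborel) = 0"
    unfolding s0 E_def N_def using LIMSEQ_unique tendsto_const by blast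
qed

locale psi_model =
  fixes dpsi :: "nat \<Rightarrow> real \<Rightarrow> real"
  assumes smooth: "smooth_halfline dpsi"
    and pos: "\<forall>r>0. dpsi 0 r > 0"
    and d1: "dpsi 1 0 = 1"
    and even: "\<forall>k. dpsi (2 * k) 0 = 0"
    and Krad: "\<forall>r>0. - dpsi 2 r / dpsi 0 r \<le> -1"
    and Ktan: "\<forall>r>0. - dpsi 2 r / dpsi 0 r \<ge> - ((dpsi 1 r)\<^sup>2 - 1) / (dpsi 0 r)\<^sup>2"
begin

lemma dw: "r \<ge> 0 \<Longrightarrow> (dpsi k has_real_derivative dpsi (Suc k) r) (at r within {0..})"
  using smooth unfolding smooth_halfline_def by auto

lemma dat: "r > 0 \<Longrightarrow> (dpsi k has_real_derivative dpsi (Suc k) r) (at r)"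
  using dw[of r k] at_within_interior[of r "{0..}"] by simp

lemma cont: "continuous_on {0..} (dpsi k)"
  unfolding continuous_on_eq_continuous_within using dw DERIV_continuous by blast

lemma p00: "dpsi 0 0 = 0" using even[rule_format, of 0] by simp
lemma p20: "dpsi 2 0 = 0" using even[rule_format, of 1] by simp

lemma ppos: "r > 0 \<Longrightarrow> dpsi 0 r > 0" using pos by auto

lemma p2ge: "r > 0 \<Longrightarrow> dpsi 2 r \<ge> dpsi 0 r"
  using Krad[rule_format, of r] ppos[of r] by (simp add: divide_le_eq)

lemma p2tan: "r > 0 \<Longrightarrow> dpsi 2 r * dpsi 0 r \<le> (dpsi 1 r)^2 - 1"
proof -
  assume r: "r > 0"
  have p: "dpsi 0 r > 0" using ppos r .
  have "- ((dpsi 1 r)\<^sup>2 - 1) / (dpsi 0 r)\<^sup>2 \<le> - dpsi 2 r / dpsi 0 r" using Ktan r by auto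
  then have "- ((dpsi 1 r)\<^sup>2 - 1) / (dpsi 0 r)\<^sup>2 * (dpsi 0 r)\<^sup>2 \<le> - dpsi 2 r / dpsi 0 r * (dpsi 0 r)\<^sup>2"
    by (rule mult_right_mono) simp
  then have "- ((dpsi 1 r)\<^sup>2 - 1) \<le> - dpsi 2 r * dpsi 0 r"
    using p by (simp add: power2_eq_square)
  then show ?thesis by simp
qed

lemma p1ge: "r \<ge> 0 \<Longrightarrow> dpsi 1 r \<ge> 1"
proof -
  assume r: "r \<ge> 0"
  have "dpsi 1 0 \<le> dpsi 1 r"
  proof (rule DERIV_nonneg_imp_increasing_open[OF r])
    fix x :: real assume x: "0 < x" "x < r"
    show "\<exists>y. (dpsi 1 has_real_derivative y) (at x) \<and> 0 \<le> y"
      using dat[of x 1] p2ge[of x] ppos[of x] x by (auto simp: numeral_2_eq_2)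
  next
    show "continuous_on {0..r} (dpsi 1)" using cont by (rule continuous_on_subset) auto
  qed
  then show ?thesis using d1 by simp
qed

lemma p0ge: "r \<ge> 0 \<Longrightarrow> dpsi 0 r \<ge> r"
proof -
  assume r: "r \<ge> 0"
  have "(\<lambda>t. dpsi 0 t - t) 0 \<le> (\<lambda>t. dpsi 0 t - t) r"
  proof (rule DERIV_nonneg_imp_increasing_open[OF r])
    fix x :: real assume x: "0 < x" "x < r"
    show "\<exists>y. ((\<lambda>t. dpsi 0 t - t) has_real_derivative y) (at x) \<and> 0 \<le> y"
      using dat[of x 0] p1ge[of x] x by (auto intro!: derivative_eq_intros)
  next
    show "continuous_on {0..r} (\<lambda>t. dpsi 0 t - t)"
      using cont[of 0] by (intro continuous_intros) (auto intro: continuous_on_subset)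
  qed
  then show ?thesis using p00 by simp
qed

lemma bounds:
  assumes R: "R > 0"
  obtains M where "M \<ge> 1" "\<And>t. 0 \<le> t \<Longrightarrow> t \<le> R \<Longrightarrow> \<bar>dpsi 1 t\<bar> \<le> M \<and> \<bar>dpsi 2 t\<bar> \<le> M \<and> dpsi 0 t \<le> M * t"
proof -
  have b: "\<exists>M. \<forall>t\<in>{0..R}. \<bar>dpsi k t\<bar> \<le> M" for k
  proof -
    have "compact (dpsi k ` {0..R})"
      by (rule compact_continuous_image) (use cont[of k] in \<open>auto intro: continuous_on_subset\<close>)
    then have "bounded (dpsi k ` {0..R})" by (rule compact_imp_bounded)
    then show ?thesis unfolding bounded_iff by auto
  qed
  obtain M1 where M1: "\<forall>t\<in>{0..R}. \<bar>dpsi 1 t\<bar> \<le> M1" using b by blast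
  obtain M2 where M2: "\<forall>t\<in>{0..R}. \<bar>dpsi 2 t\<bar> \<le> M2" using b by blast
  define M where "M = max 1 (max M1 M2)"
  have up: "dpsi 0 t \<le> M * t" if t: "0 \<le> t" "t \<le> R" for t
  proof -
    have "(\<lambda>s. M * s - dpsi 0 s) 0 \<le> (\<lambda>s. M * s - dpsi 0 s) t"
    proof (rule DERIV_nonneg_imp_increasing_open[OF t(1)])
      fix x :: real assume x: "0 < x" "x < t"
      have "\<bar>dpsi 1 x\<bar> \<le> M1" using M1 x t by auto
      then have "dpsi 1 x \<le> M" unfolding M_def by linarith
      then show "\<exists>y. ((\<lambda>s. M * s - dpsi 0 s) has_real_derivative y) (at x) \<and> 0 \<le> y"
        using dat[of x 0] x by (auto intro!: derivative_eq_intros)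
    next
      show "continuous_on {0..t} (\<lambda>s. M * s - dpsi 0 s)"
        using cont[of 0] by (intro continuous_intros) (auto intro: continuous_on_subset)
    qed
    then show ?thesis using p00 by simp
  qed
  show ?thesis
  proof (rule that[of M])
    show "M \<ge> 1" unfolding M_def by simp
    fix t assume "0 \<le> t" "t \<le> R"
    then show "\<bar>dpsi 1 t\<bar> \<le> M \<and> \<bar>dpsi 2 t\<bar> \<le> M \<and> dpsi 0 t \<le> M * t"
      using M1 M2 up unfolding M_def by force
  qed
qed

lemma meas_norm[measurable]: "(\<lambda>y::'a::euclidean_space. dpsi k (norm y)) \<in> borel_measurable borel"
proof (rule borel_measurable_continuous_onI)
  show "continuous_on UNIV (\<lambda>y::'a. dpsi k (norm y))"
    by (rule continuous_on_compose2[OF cont[of k]]) (auto intro: continuous_intros)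
qed

end

lemma cinf_D: "cinf f \<Longrightarrow> f differentiable_on UNIV \<and> (\<forall>i. cinf (\<lambda>x. frechet_derivative f (at x) (axis i 1)))"
  by (erule cinf.cases) auto

lemma cinf_diff: "cinf f \<Longrightarrow> f differentiable (at x)"
  using cinf_D[of f] unfolding differentiable_on_def by auto

lemma cinf_cont: "cinf f \<Longrightarrow> continuous_on UNIV f"
  using cinf_D[of f] differentiable_imp_continuous_on by blast

lemma fd_expand:
  fixes f :: "real^'n \<Rightarrow> real"
  assumes "f differentiable (at z)"
  shows "frechet_derivative f (at z) e = (\<Sum>i\<in>UNIV. e$i * frechet_derivative f (at z) (axis i 1))"
proof -
  have lin: "linear (frechet_derivative f (at z))" using linear_frechet_derivative[OF assms] .
  have "frechet_derivative f (at z) e = frechet_derivative f (at z) (\<Sum>i\<in>UNIV. e$i *\<^sub>R axis i 1)"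
    using basis_expansion[of e] by (simp add: scalar_mult_eq_scaleR)
  also have "\<dots> = (\<Sum>i\<in>UNIV. e$i * frechet_derivative f (at z) (axis i 1))"
    using lin by (simp add: linear_sum linear_scale)
  finally show ?thesis .
qed

lemma ray_deriv:
  fixes f :: "real^'n \<Rightarrow> real"
  assumes "cinf f"
  shows "((\<lambda>s. f (s *\<^sub>R e)) has_real_derivative
           (\<Sum>i\<in>UNIV. e$i * frechet_derivative f (at (t *\<^sub>R e)) (axis i 1))) (at t)"
proof -
  have d: "f differentiable (at (t *\<^sub>R e))" using cinf_diff[OF assms] .
  have fd: "(f has_derivative frechet_derivative f (at (t *\<^sub>R e))) (at (t *\<^sub>R e))"
    using d frechet_derivative_works by blast
  have lin: "linear (frechet_derivative f (at (t *\<^sub>R e)))" using linear_frechet_derivative[OF d] .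
  have sd: "((\<lambda>s. s *\<^sub>R e) has_derivative (\<lambda>h. h *\<^sub>R e)) (at t)"
    by (auto intro!: derivative_eq_intros)
  have "((\<lambda>s. f (s *\<^sub>R e)) has_derivative (\<lambda>h. frechet_derivative f (at (t *\<^sub>R e)) (h *\<^sub>R e))) (at t)"
    using has_derivative_compose[OF sd fd] by (simp add: o_def)
  moreover have "(\<lambda>h. frechet_derivative f (at (t *\<^sub>R e)) (h *\<^sub>R e)) = (\<lambda>h. frechet_derivative f (at (t *\<^sub>R e)) e * h)"
    using lin by (simp add: linear_scale mult.commute)
  ultimately have "((\<lambda>s. f (s *\<^sub>R e)) has_real_derivative frechet_derivative f (at (t *\<^sub>R e)) e) (at t)"
    by (simp add: has_field_derivative_def)
  then show ?thesis using fd_expand[OF d, of e] by simp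
qed

locale u_fun =
  fixes u :: "real^'n \<Rightarrow> real"
  assumes cu: "cinf_c u"
begin

definition P :: "'n \<Rightarrow> real^'n \<Rightarrow> real" where
  "P i = (\<lambda>z. frechet_derivative u (at z) (axis i 1))"
definition Qm :: "'n \<Rightarrow> 'n \<Rightarrow> real^'n \<Rightarrow> real" where
  "Qm i j = (\<lambda>z. frechet_derivative (P i) (at z) (axis j 1))"

lemma cinf_u: "cinf u" using cu unfolding cinf_c_def by simp
lemma cinf_P: "cinf (P i)" using cinf_D[OF cinf_u] unfolding P_def by blast
lemma cinf_Q: "cinf (Qm i j)" using cinf_D[OF cinf_P[of i]] unfolding Qm_def by blast

lemma cont_u: "continuous_on UNIV u" by (rule cinf_cont[OF cinf_u])
lemma cont_P: "continuous_on UNIV (P i)" by (rule cinf_cont[OF cinf_P])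
lemma cont_Q: "continuous_on UNIV (Qm i j)" by (rule cinf_cont[OF cinf_Q])

definition d1 :: "real^'n \<Rightarrow> real \<Rightarrow> real" where
  "d1 e t = (\<Sum>i\<in>UNIV. e$i * P i (t *\<^sub>R e))"
definition d2 :: "real^'n \<Rightarrow> real \<Rightarrow> real" where
  "d2 e t = (\<Sum>i\<in>UNIV. e$i * (\<Sum>j\<in>UNIV. e$j * Qm i j (t *\<^sub>R e)))"

lemma f_deriv: "((\<lambda>s. u (s *\<^sub>R e)) has_real_derivative d1 e t) (at t)"
  using ray_deriv[OF cinf_u, of e t] unfolding d1_def P_def .

lemma d1_deriv: "(d1 e has_real_derivative d2 e t) (at t)"
proof -
  have "((\<lambda>s. \<Sum>i\<in>UNIV. e$i * P i (s *\<^sub>R e)) has_real_derivative d2 e t) (at t)"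
    unfolding d2_def Qm_def
    by (intro DERIV_sum DERIV_cmult ray_deriv[OF cinf_P])
  then show ?thesis unfolding d1_def[abs_def] .
qed

lemma deriv_f: "deriv (\<lambda>s. u (s *\<^sub>R e)) = d1 e"
  using f_deriv DERIV_imp_deriv by blast

lemma deriv_d1: "deriv (d1 e) = d2 e"
  using d1_deriv DERIV_imp_deriv by blast

lemma rad_d1_eq: "rad_d1 u y = d1 (sgn y) (norm y)"
  unfolding rad_d1_def deriv_f ..

lemma rad_d2_eq: "rad_d2 u y = d2 (sgn y) (norm y)"
  unfolding rad_d2_def deriv_f deriv_d1 ..

lemma ne_y: "norm y *\<^sub>R sgn y = y"
  by (cases "y = 0") (simp_all add: sgn_div_norm)

lemma rad_d1_formula: "rad_d1 u y = (\<Sum>i\<in>UNIV. (sgn y)$i * P i y)"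
  unfolding rad_d1_eq d1_def ne_y ..

lemma rad_d2_formula: "rad_d2 u y = (\<Sum>i\<in>UNIV. (sgn y)$i * (\<Sum>j\<in>UNIV. (sgn y)$j * Qm i j y))"
  unfolding rad_d2_eq d2_def ne_y ..

lemma meas_nth[measurable]: "(\<lambda>x::real^'n. x $ i) \<in> borel_measurable borel"
  by (rule borel_measurable_continuous_onI) (intro continuous_intros)
lemma meas_sgn_nth[measurable]: "(\<lambda>x::real^'n. sgn x $ i) \<in> borel_measurable borel"
  by (rule measurable_compose[OF borel_measurable_sgn meas_nth])

lemma meas_u[measurable]: "u \<in> borel_measurable borel"
  by (rule borel_measurable_continuous_onI[OF cont_u])
lemma meas_P[measurable]: "P i \<in> borel_measurable borel"
  by (rule borel_measurable_continuous_onI[OF cont_P])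
lemma meas_Q[measurable]: "Qm i j \<in> borel_measurable borel"
  by (rule borel_measurable_continuous_onI[OF cont_Q])

lemma meas_rd1[measurable]: "rad_d1 u \<in> borel_measurable borel"
  unfolding rad_d1_formula[abs_def] by measurable
lemma meas_rd2[measurable]: "rad_d2 u \<in> borel_measurable borel"
  unfolding rad_d2_formula[abs_def] by measurable

lemma ray_facts:
  assumes "t > 0" "norm e = 1"
  shows "u (t *\<^sub>R e) = u (t *\<^sub>R e)" "rad_d1 u (t *\<^sub>R e) = d1 e t" "rad_d2 u (t *\<^sub>R e) = d2 e t"
proof -
  have s: "sgn (t *\<^sub>R e) = e" using assms by (simp add: sgn_scaleR sgn_div_norm)
  have n: "norm (t *\<^sub>R e) = t" using assms by simp
  show "u (t *\<^sub>R e) = u (t *\<^sub>R e)" ..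
  show "rad_d1 u (t *\<^sub>R e) = d1 e t" unfolding rad_d1_eq s n ..
  show "rad_d2 u (t *\<^sub>R e) = d2 e t" unfolding rad_d2_eq s n ..
qed

lemma support: obtains R where "R > 0" "\<And>y::real^'n. norm y > R \<Longrightarrow> u y = 0"
proof -
  have "bounded (closure {x. u x \<noteq> 0})" using cu unfolding cinf_c_def by (simp add: compact_imp_bounded)
  then obtain B where B: "\<And>x. x \<in> closure {x. u x \<noteq> 0} \<Longrightarrow> norm x \<le> B" unfolding bounded_iff by blast
  show ?thesis
  proof (rule that[of "max B 1"])
    show "max B 1 > 0" by simp
    fix y :: "real^'n" assume "norm y > max B 1"
    then show "u y = 0" using B[of y] closure_subset[of "{x. u x \<noteq> 0}"] by force
  qed
qed

lemma fd_zero: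
  fixes f :: "real^'n \<Rightarrow> real"
  assumes "f differentiable (at y)" "open S" "y \<in> S" "\<And>z. z \<in> S \<Longrightarrow> f z = 0"
  shows "frechet_derivative f (at y) h = 0"
proof -
  have "((\<lambda>z. 0::real) has_derivative (\<lambda>h. 0)) (at y)" by simp
  then have "(f has_derivative (\<lambda>h. 0)) (at y)"
    by (rule has_derivative_transform_within_open[OF _ assms(2,3)]) (use assms(4) in auto)
  then show ?thesis using frechet_derivative_at by metis
qed

lemma support2:
  obtains R where "R > 0" "\<And>y::real^'n. norm y > R \<Longrightarrow> u y = 0 \<and> (\<forall>i. P i y = 0) \<and> (\<forall>i j. Qm i j y = 0)"
proof -
  obtain R where R: "R > 0" "\<And>y. norm y > R \<Longrightarrow> u y = 0" using support by blast
  have o: "open {z::real^'n. norm z > R}" by (intro open_Collect_less continuous_intros)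
  have Pz: "P i y = 0" if "norm y > R" for i y
    unfolding P_def by (rule fd_zero[OF cinf_diff[OF cinf_u] o]) (use that R in auto)
  have Qz: "Qm i j y = 0" if "norm y > R" for i j y
    unfolding Qm_def by (rule fd_zero[OF cinf_diff[OF cinf_P] o]) (use that Pz in auto)
  show ?thesis using that[OF R(1)] R Pz Qz by blast
qed

lemma cbounded:
  fixes h :: "real^'n \<Rightarrow> real"
  assumes "continuous_on UNIV h"
  shows "\<exists>B. \<forall>y\<in>cball 0 R. \<bar>h y\<bar> \<le> B"
proof -
  have "compact (h ` cball 0 R)"
    by (rule compact_continuous_image) (use assms in \<open>auto intro: continuous_on_subset\<close>)
  then have "bounded (h ` cball 0 R)" by (rule compact_imp_bounded)
  then obtain B where "\<forall>x\<in>h ` cball 0 R. norm x \<le> B" unfolding bounded_iff by blast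
  then show ?thesis by auto
qed

lemma sum_bound:
  fixes e :: "real^'n"
  assumes "norm e \<le> 1"
  shows "\<bar>\<Sum>i\<in>UNIV. e$i * a i\<bar> \<le> (\<Sum>i\<in>UNIV. \<bar>a i\<bar>)"
proof -
  have "\<bar>\<Sum>i\<in>UNIV. e$i * a i\<bar> \<le> (\<Sum>i\<in>UNIV. \<bar>e$i * a i\<bar>)" by (rule sum_abs)
  also have "\<dots> \<le> (\<Sum>i\<in>UNIV. \<bar>a i\<bar>)"
  proof (rule sum_mono)
    fix i
    have "\<bar>e$i\<bar> \<le> 1" using component_le_norm_cart[of e i] assms by linarith
    then show "\<bar>e$i * a i\<bar> \<le> \<bar>a i\<bar>" by (simp add: abs_mult mult_left_le_one_le)
  qed
  finally show ?thesis .
qed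

lemma ubounds:
  obtains R B where "R > 0" "B \<ge> 0"
    "\<And>y. norm y > R \<Longrightarrow> u y = 0 \<and> rad_d1 u y = 0 \<and> rad_d2 u y = 0"
    "\<And>y. \<bar>u y\<bar> \<le> B \<and> \<bar>rad_d1 u y\<bar> \<le> B \<and> \<bar>rad_d2 u y\<bar> \<le> B"
proof -
  obtain R where R: "R > 0" "\<And>y. norm y > R \<Longrightarrow> u y = 0 \<and> (\<forall>i. P i y = 0) \<and> (\<forall>i j. Qm i j y = 0)"
    using support2 by blast
  define H where "H = (\<lambda>y. \<bar>u y\<bar> + (\<Sum>i\<in>UNIV. \<bar>P i y\<bar>) + (\<Sum>i\<in>UNIV. \<Sum>j\<in>UNIV. \<bar>Qm i j y\<bar>))"
  have "continuous_on UNIV H" unfolding H_def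
    using cont_u cont_P cont_Q by (intro continuous_intros) auto
  then obtain B where B: "\<forall>y\<in>cball 0 R. \<bar>H y\<bar> \<le> B" using cbounded by blast
  have ns: "norm (sgn y) \<le> 1" for y :: "real^'n" by (simp add: norm_sgn)
  have r1: "\<bar>rad_d1 u y\<bar> \<le> (\<Sum>i\<in>UNIV. \<bar>P i y\<bar>)" for y
    unfolding rad_d1_formula by (rule sum_bound[OF ns])
  have r2: "\<bar>rad_d2 u y\<bar> \<le> (\<Sum>i\<in>UNIV. \<Sum>j\<in>UNIV. \<bar>Qm i j y\<bar>)" for y
  proof -
    have "\<bar>rad_d2 u y\<bar> \<le> (\<Sum>i\<in>UNIV. \<bar>\<Sum>j\<in>UNIV. (sgn y)$j * Qm i j y\<bar>)"
      unfolding rad_d2_formula by (rule sum_bound[OF ns])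
    also have "\<dots> \<le> (\<Sum>i\<in>UNIV. \<Sum>j\<in>UNIV. \<bar>Qm i j y\<bar>)"
      by (intro sum_mono sum_bound[OF ns])
    finally show ?thesis .
  qed
  show ?thesis
  proof (rule that[of R "max B 0"])
    show "R > 0" by fact
    show "max B 0 \<ge> 0" by simp
    fix y :: "real^'n"
    show "norm y > R \<Longrightarrow> u y = 0 \<and> rad_d1 u y = 0 \<and> rad_d2 u y = 0"
      using R(2)[of y] unfolding rad_d1_formula rad_d2_formula by simp
    show "\<bar>u y\<bar> \<le> max B 0 \<and> \<bar>rad_d1 u y\<bar> \<le> max B 0 \<and> \<bar>rad_d2 u y\<bar> \<le> max B 0"
    proof (cases "norm y > R")
      case True then show ?thesis using R(2)[of y] unfolding rad_d1_formula rad_d2_formula by simp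
    next
      case False
      then have "\<bar>H y\<bar> \<le> B" using B by auto
      moreover have "0 \<le> (\<Sum>i\<in>UNIV. \<bar>P i y\<bar>)" "0 \<le> (\<Sum>i\<in>UNIV. \<Sum>j\<in>UNIV. \<bar>Qm i j y\<bar>)"
        by (auto intro: sum_nonneg)
      ultimately show ?thesis using r1[of y] r2[of y] unfolding H_def by linarith
    qed
  qed
qed

end

lemma pw_identity:
  fixes r p p1 p2 a b c mm w ip ir :: real
  shows "(c + mm*p1*ip*b)^2*w - (mm/2)^4*a^2*w
          - (mm^2/16*(a^2*ir^2) + mm^3*(mm-2)/16*(a^2*ip^2) + 1/4*(b^2*ir^2) + ((mm+1)^2-1)/4*(b^2*ip^2))*w
          - (((mm/2)*(p2*(w*ip) + (mm-1)*p1^2*(w*ip^2)) + mm*p1*(w*ip)*ir/2 - w*ir^2/2)*b^2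
             + 2*((mm/2)*p1*(w*ip) + w*ir/2)*b*c
             + (-(mm^2/4)*((mm/2)*(p2*(w*ip) + (mm-1)*p1^2*(w*ip^2)) - mm*p1*(w*ip)*ir/2 + w*ir^2/2))*a^2
             + 2*(-(mm^2/4)*((mm/2)*p1*(w*ip) - w*ir/2))*a*b)
         = w*((c+((mm/2)*p1*ip - ir/2)*b)^2 + (mm^2/4)*(b+((mm/2)*p1*ip - ir/2)*a)^2
             + mm*b^2*((p1^2 - 1)*ip^2 - p2*ip)
             + b^2*((mm/2)*(p2*ip - 1) + mm*(mm-2)/4*((p1^2 - 1)*ip^2 - 1))
             + (mm^2/4)*a^2*((mm/2)*(p2*ip - 1) + mm*(mm-2)/4*((p1^2 - 1)*ip^2 - 1)))"
  by (simp add: field_simps) algebra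

lemma A_deriv:
  fixes f0 f1 f2 :: "real \<Rightarrow> real"
  assumes d0: "(f0 has_real_derivative f1 r) (at r)" and d1: "(f1 has_real_derivative f2 r) (at r)"
    and m: "m \<ge> 2"
  shows "((\<lambda>s. real m/2 * f1 s * f0 s^(m-1)) has_real_derivative
          (real m/2)*(f2 r * f0 r^(m-1) + (real m - 1)*(f1 r)^2*f0 r^(m-2))) (at r)"
proof -
  have "((\<lambda>s. real m/2 * f1 s * f0 s^(m-1)) has_real_derivative
          real m/2 * f2 r * f0 r^(m-1) + real m/2 * f1 r * (real (m-1) * f0 r^(m-1-1) * f1 r)) (at r)"
    by (auto intro!: derivative_eq_intros d0 d1)
  moreover have "m - 1 - 1 = m - 2" by simp
  moreover have "real (m - 1) = real m - 1" using m by simp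
  ultimately show ?thesis by (simp add: algebra_simps power2_eq_square)
qed

lemma B_deriv:
  fixes f0 f1 :: "real \<Rightarrow> real"
  assumes d0: "(f0 has_real_derivative f1 r) (at r)" and r: "r > 0" and m: "m \<ge> 1"
  shows "((\<lambda>s. f0 s^m/(2 * s)) has_real_derivative
          real m * f1 r * f0 r^(m-1)/(2*r) - f0 r^m/(2*r^2)) (at r)"
proof -
  have "((\<lambda>s. f0 s^m/(2 * s)) has_real_derivative
          (real m * f0 r^(m-1) * f1 r * (2*r) - f0 r^m * (2 * 1)) / (2*r)^2) (at r)"
    using r by (auto intro!: derivative_eq_intros d0 simp: power2_eq_square mult_ac)
  then show ?thesis by (rule DERIV_cong) (use r in \<open>simp add: field_simps power2_eq_square\<close>)
qed

lemma pw_ineq: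
  fixes r p p1 p2 a b c :: real and n :: nat
  assumes r: "r > 0" and p: "p > 0" and n: "n \<ge> 3" and h1: "p2 \<ge> p" and h2: "p2 * p \<le> p1^2 - 1"
  defines "m \<equiv> n - 1"
  defines "A \<equiv> real m/2 * p1 * p^(m-1)"
  defines "A' \<equiv> (real m/2)*(p2 * p^(m-1) + (real m - 1)*p1^2*p^(m-2))"
  defines "Bq \<equiv> p^m/(2*r)"
  defines "Bq' \<equiv> real m * p1 * p^(m-1)/(2*r) - p^m/(2*r^2)"
  shows "(c + (real n - 1) * p1 / p * b)^2 * (p/r)^(n-1) \<ge>
      ((real n - 1)/2)^4 * (a^2 * (p/r)^(n-1))
    + (real n - 1)^2/16 * (a^2/r^2 * (p/r)^(n-1))
    + (real n - 1)^3*(real n - 3)/16 * (a^2/p^2*(p/r)^(n-1))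
    + 1/4*(b^2/r^2*(p/r)^(n-1))
    + ((real n)^2-1)/4*(b^2/p^2*(p/r)^(n-1))
    + ((A' + Bq') * b^2 + 2 * (A + Bq) * b * c + (-(real m^2/4)*(A' - Bq')) * a^2
        + 2 * (-(real m^2/4)*(A - Bq)) * a * b) / r^(n-1)"
proof -
  define mm where "mm = real m"
  define w where "w = p^m"
  define ip where "ip = inverse p"
  define ir where "ir = inverse r"
  have mm: "real n - 1 = mm" "real n - 3 = mm - 2" "real n = mm + 1" unfolding mm_def m_def using n by auto
  have mm2: "mm \<ge> 2" unfolding mm_def m_def using n by auto
  have w: "w > 0" unfolding w_def using p by simp
  have pm1: "p^(m-1) = w * ip" unfolding w_def ip_def m_def using p n
    by (simp add: power_diff field_simps)
  have pm2: "p^(m-2) = w * ip^2" unfolding w_def ip_def m_def using p n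
    by (simp add: power_diff field_simps power2_eq_square)
  define irm where "irm = ir^m"
  have prm: "(p/r)^(n-1) = w * irm" unfolding w_def irm_def ir_def m_def power_divide by (simp add: divide_inverse power_inverse)
  have rm: "1 / r^(n-1) = ir^m" unfolding ir_def m_def by (simp add: power_inverse divide_inverse)
  have irp: "irm > 0" unfolding irm_def ir_def using r by simp
  let ?S = "(c + mm*p1*ip*b)^2*w - (mm/2)^4*a^2*w
          - (mm^2/16*(a^2*ir^2) + mm^3*(mm-2)/16*(a^2*ip^2) + 1/4*(b^2*ir^2) + ((mm+1)^2-1)/4*(b^2*ip^2))*w
          - (((mm/2)*(p2*(w*ip) + (mm-1)*p1^2*(w*ip^2)) + mm*p1*(w*ip)*ir/2 - w*ir^2/2)*b^2
             + 2*((mm/2)*p1*(w*ip) + w*ir/2)*b*c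
             + (-(mm^2/4)*((mm/2)*(p2*(w*ip) + (mm-1)*p1^2*(w*ip^2)) - mm*p1*(w*ip)*ir/2 + w*ir^2/2))*a^2
             + 2*(-(mm^2/4)*((mm/2)*p1*(w*ip) - w*ir/2))*a*b)"
  have X: "(p1^2 - 1)*ip^2 - p2*ip \<ge> 0"
  proof -
    have "(p1^2 - 1)*ip^2 - p2*ip = (p1^2 - 1 - p2*p) * ip^2" unfolding ip_def using p
      by (simp add: field_simps power2_eq_square)
    then show ?thesis using h2 by simp
  qed
  have Y: "(mm/2)*(p2*ip - 1) + mm*(mm-2)/4*((p1^2 - 1)*ip^2 - 1) \<ge> 0"
  proof -
    have a1: "p2*ip - 1 \<ge> 0" unfolding ip_def using h1 p by (simp add: field_simps)
    have pp: "p^2 \<le> p2 * p" using h1 p by (simp add: power2_eq_square)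
    have "(p1^2 - 1)*ip^2 - 1 = (p1^2 - 1 - p^2) * ip^2"
      unfolding ip_def using p by (auto simp: field_simps power2_eq_square)
    moreover have "p1^2 - 1 - p^2 \<ge> 0" using pp h2 by linarith
    ultimately have a2: "(p1^2 - 1)*ip^2 - 1 \<ge> 0" by simp
    show ?thesis using a1 a2 mm2 by simp
  qed
  have t3: "0 \<le> mm*b^2*((p1^2 - 1)*ip^2 - p2*ip)"
    by (rule mult_nonneg_nonneg[OF mult_nonneg_nonneg[OF _ zero_le_power2] X]) (use mm2 in simp)
  have t4: "0 \<le> b^2*((mm/2)*(p2*ip - 1) + mm*(mm-2)/4*((p1^2 - 1)*ip^2 - 1))"
    by (rule mult_nonneg_nonneg[OF zero_le_power2 Y])
  have t5: "0 \<le> (mm^2/4)*a^2*((mm/2)*(p2*ip - 1) + mm*(mm-2)/4*((p1^2 - 1)*ip^2 - 1))"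
    by (rule mult_nonneg_nonneg[OF mult_nonneg_nonneg[OF _ zero_le_power2] Y]) simp
  have t1: "0 \<le> (c+((mm/2)*p1*ip - ir/2)*b)^2" by (rule zero_le_power2)
  have t2: "0 \<le> (mm^2/4)*(b+((mm/2)*p1*ip - ir/2)*a)^2"
    by (rule mult_nonneg_nonneg[OF _ zero_le_power2]) simp
  have T: "0 \<le> (c+((mm/2)*p1*ip - ir/2)*b)^2 + (mm^2/4)*(b+((mm/2)*p1*ip - ir/2)*a)^2
             + mm*b^2*((p1^2 - 1)*ip^2 - p2*ip)
             + b^2*((mm/2)*(p2*ip - 1) + mm*(mm-2)/4*((p1^2 - 1)*ip^2 - 1))
             + (mm^2/4)*a^2*((mm/2)*(p2*ip - 1) + mm*(mm-2)/4*((p1^2 - 1)*ip^2 - 1))"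
    by (intro add_nonneg_nonneg t1 t2 t3 t4 t5)
  have S: "?S \<ge> 0"
    unfolding pw_identity by (rule mult_nonneg_nonneg[OF less_imp_le[OF w] T])
  have eq: "(c + (real n - 1) * p1 / p * b)^2 * (p/r)^(n-1) -
      (((real n - 1)/2)^4 * (a^2 * (p/r)^(n-1))
    + (real n - 1)^2/16 * (a^2/r^2 * (p/r)^(n-1))
    + (real n - 1)^3*(real n - 3)/16 * (a^2/p^2*(p/r)^(n-1))
    + 1/4*(b^2/r^2*(p/r)^(n-1))
    + ((real n)^2-1)/4*(b^2/p^2*(p/r)^(n-1))
    + ((A' + Bq') * b^2 + 2 * (A + Bq) * b * c + (-(real m^2/4)*(A' - Bq')) * a^2
        + 2 * (-(real m^2/4)*(A - Bq)) * a * b) / r^(n-1)) = ?S * irm" (is "?L - ?R = _")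
  proof -
    have d: "x / r^(n-1) = x * irm" for x unfolding irm_def ir_def m_def by (simp add: divide_inverse power_inverse)
    have d2: "x / p = x * ip" "x / p^2 = x * ip^2" "x / r^2 = x * ir^2" "x / (2*r) = x * ir / 2"
      "x / (2*r^2) = x * ir^2 / 2" for x
    proof -
      show "x / p = x * ip" unfolding ip_def divide_inverse ..
      show "x / p^2 = x * ip^2" unfolding ip_def power_inverse divide_inverse ..
      show "x / r^2 = x * ir^2" unfolding ir_def power_inverse divide_inverse ..
      show "x / (2*r) = x * ir / 2" unfolding ir_def using r by (simp add: field_simps)
      show "x / (2*r^2) = x * ir^2 / 2" unfolding ir_def using r by (simp add: field_simps)
    qed
    show ?thesis
      unfolding A_def A'_def Bq_def Bq'_def d prm pm1 pm2 mm d2 mm_def[symmetric] w_def[symmetric]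
      by (simp add: field_simps)
  qed
  have "?S * irm \<ge> 0" by (rule mult_nonneg_nonneg[OF S]) (use irp in simp)
  then have "0 \<le> ?L - ?R" unfolding eq .
  then show ?thesis by (rule diff_ge_0_iff_ge[THEN iffD1])
qed

definition Ob :: "real \<Rightarrow> nat \<Rightarrow> ('a::real_normed_vector \<Rightarrow> real) \<Rightarrow> bool" where
  "Ob R k f \<longleftrightarrow> (\<exists>K\<ge>0. \<forall>y. y \<noteq> 0 \<longrightarrow> norm y \<le> R \<longrightarrow> \<bar>f y\<bar> \<le> K * norm y ^ k)"

lemma ObI: "K \<ge> 0 \<Longrightarrow> (\<And>y. y \<noteq> 0 \<Longrightarrow> norm y \<le> R \<Longrightarrow> \<bar>f y\<bar> \<le> K * norm y ^ k) \<Longrightarrow> Ob R k f"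
  unfolding Ob_def by blast

lemma ObE: assumes "Ob R k f"
  obtains K where "K \<ge> 0" "\<And>y. y \<noteq> 0 \<Longrightarrow> norm y \<le> R \<Longrightarrow> \<bar>f y\<bar> \<le> K * norm y ^ k"
  using assms unfolding Ob_def by blast

lemma ob_mult: assumes "Ob R j f" "Ob R k g" shows "Ob R (j + k) (\<lambda>y. f y * g y)"
proof -
  obtain K1 where K1: "K1 \<ge> 0" "\<And>y::'a. y \<noteq> 0 \<Longrightarrow> norm y \<le> R \<Longrightarrow> \<bar>f y\<bar> \<le> K1 * norm y ^ j" using ObE[OF assms(1)] by blast
  obtain K2 where K2: "K2 \<ge> 0" "\<And>y::'a. y \<noteq> 0 \<Longrightarrow> norm y \<le> R \<Longrightarrow> \<bar>g y\<bar> \<le> K2 * norm y ^ k" using ObE[OF assms(2)] by blast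
  show ?thesis
  proof (rule ObI[of "K1 * K2"])
    show "K1 * K2 \<ge> 0" using K1 K2 by simp
    fix y :: 'a assume y: "y \<noteq> 0" "norm y \<le> R"
    have "\<bar>f y * g y\<bar> \<le> (K1 * norm y ^ j) * (K2 * norm y ^ k)"
      unfolding abs_mult by (rule mult_mono) (use K1 K2 y in auto)
    then show "\<bar>f y * g y\<bar> \<le> K1 * K2 * norm y ^ (j + k)" by (simp add: power_add mult_ac)
  qed
qed

lemma ob_add: assumes "Ob R k f" "Ob R k g" shows "Ob R k (\<lambda>y. f y + g y)"
proof -
  obtain K1 where K1: "K1 \<ge> 0" "\<And>y::'a. y \<noteq> 0 \<Longrightarrow> norm y \<le> R \<Longrightarrow> \<bar>f y\<bar> \<le> K1 * norm y ^ k" using ObE[OF assms(1)] by blast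
  obtain K2 where K2: "K2 \<ge> 0" "\<And>y::'a. y \<noteq> 0 \<Longrightarrow> norm y \<le> R \<Longrightarrow> \<bar>g y\<bar> \<le> K2 * norm y ^ k" using ObE[OF assms(2)] by blast
  show ?thesis
  proof (rule ObI[of "K1 + K2"])
    show "K1 + K2 \<ge> 0" using K1 K2 by simp
    fix y :: 'a assume y: "y \<noteq> 0" "norm y \<le> R"
    show "\<bar>f y + g y\<bar> \<le> (K1 + K2) * norm y ^ k"
      using K1(2)[OF y] K2(2)[OF y] by (simp add: distrib_right)
  qed
qed

lemma ob_cmult: assumes "Ob R k f" shows "Ob R k (\<lambda>y. c * f y)"
proof -
  obtain K1 where K1: "K1 \<ge> 0" "\<And>y::'a. y \<noteq> 0 \<Longrightarrow> norm y \<le> R \<Longrightarrow> \<bar>f y\<bar> \<le> K1 * norm y ^ k" using ObE[OF assms(1)] by blast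
  show ?thesis
  proof (rule ObI[of "\<bar>c\<bar> * K1"])
    show "\<bar>c\<bar> * K1 \<ge> 0" using K1 by simp
    fix y :: 'a assume y: "y \<noteq> 0" "norm y \<le> R"
    show "\<bar>c * f y\<bar> \<le> \<bar>c\<bar> * K1 * norm y ^ k"
      using mult_left_mono[OF K1(2)[OF y], of "\<bar>c\<bar>"] by (simp add: abs_mult mult_ac)
  qed
qed

lemma ob_diff: assumes "Ob R k f" "Ob R k g" shows "Ob R k (\<lambda>y. f y - g y)"
  using ob_add[OF assms(1) ob_cmult[OF assms(2), of "-1"]] by simp

lemma ob_weaken: assumes "Ob R j f" "k \<le> j" "R \<ge> 0" shows "Ob R k f"
proof -
  obtain K1 where K1: "K1 \<ge> 0" "\<And>y::'a. y \<noteq> 0 \<Longrightarrow> norm y \<le> R \<Longrightarrow> \<bar>f y\<bar> \<le> K1 * norm y ^ j" using ObE[OF assms(1)] by blast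
  show ?thesis
  proof (rule ObI[of "K1 * R ^ (j - k)"])
    show "K1 * R ^ (j - k) \<ge> 0" using K1 assms by simp
    fix y :: 'a assume y: "y \<noteq> 0" "norm y \<le> R"
    have "norm y ^ j = norm y ^ k * norm y ^ (j - k)" using assms(2) by (simp add: power_add[symmetric])
    also have "\<dots> \<le> norm y ^ k * R ^ (j - k)" using y by (intro mult_left_mono power_mono) auto
    finally have "K1 * norm y ^ j \<le> K1 * (norm y ^ k * R ^ (j - k))" using K1 by (intro mult_left_mono) auto
    then show "\<bar>f y\<bar> \<le> K1 * R ^ (j - k) * norm y ^ k" using K1(2)[OF y] by (simp add: mult_ac)
  qed
qed

lemma ob_div: assumes "Ob R (Suc k) f" shows "Ob R k (\<lambda>y. f y / norm y)"
proof -
  obtain K1 where K1: "K1 \<ge> 0" "\<And>y::'a. y \<noteq> 0 \<Longrightarrow> norm y \<le> R \<Longrightarrow> \<bar>f y\<bar> \<le> K1 * norm y ^ Suc k" using ObE[OF assms(1)] by blast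
  show ?thesis
  proof (rule ObI[OF K1(1)])
    fix y :: 'a assume y: "y \<noteq> 0" "norm y \<le> R"
    have "\<bar>f y / norm y\<bar> = \<bar>f y\<bar> / norm y" by (simp add: abs_div)
    also have "\<dots> \<le> K1 * norm y ^ Suc k / norm y" using K1(2)[OF y] by (intro divide_right_mono) auto
    also have "\<dots> = K1 * norm y ^ k" using y by simp
    finally show "\<bar>f y / norm y\<bar> \<le> K1 * norm y ^ k" .
  qed
qed

lemma ob_pow: assumes "Ob R k f" shows "Ob R (k * n) (\<lambda>y. f y ^ n)"
proof (induction n)
  case 0 show ?case by (rule ObI[of 1]) auto
next
  case (Suc n)
  have "Ob R (k + k * n) (\<lambda>y. f y * f y ^ n)" by (rule ob_mult[OF assms Suc.IH])
  then show ?case by (simp add: add.commute)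
qed

lemma ob_bdd: "K \<ge> 0 \<Longrightarrow> (\<And>y. y \<noteq> 0 \<Longrightarrow> norm y \<le> R \<Longrightarrow> \<bar>f y\<bar> \<le> K) \<Longrightarrow> Ob R 0 f"
  by (rule ObI[of K]) auto

lemma ob_ext: "Ob R k f \<Longrightarrow> (\<And>y. y \<noteq> 0 \<Longrightarrow> norm y \<le> R \<Longrightarrow> g y = f y) \<Longrightarrow> Ob R k g"
  unfolding Ob_def by metis

lemma ob_norm: "Ob R 1 (\<lambda>y. norm y)"
  by (rule ObI[of 1]) auto

lemma ob_const: "Ob R 0 (\<lambda>y. c)"
  by (rule ObI[of "\<bar>c\<bar>"]) auto

lemma int_ob:
  fixes F Z :: "real^'n \<Rightarrow> real"
  assumes N: "CARD('n) \<ge> 3" and R: "R > 0" and Fm: "F \<in> borel_measurable borel" and Z: "Ob R 0 Z"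
    and eq: "\<And>y. y \<noteq> 0 \<Longrightarrow> norm y \<le> R \<Longrightarrow> F y = Z y / (norm y)^2"
    and supp: "\<And>y. norm y > R \<Longrightarrow> F y = 0"
  shows "integrable lborel F"
proof -
  obtain K where K: "K \<ge> 0" "\<And>y::real^'n. y \<noteq> 0 \<Longrightarrow> norm y \<le> R \<Longrightarrow> \<bar>Z y\<bar> \<le> K * norm y ^ 0"
    using ObE[OF Z] by blast
  show ?thesis
  proof (rule inv_sq_integrable[OF N Fm R _ supp])
    fix y :: "real^'n" assume y: "y \<noteq> 0" "norm y \<le> R"
    have "\<bar>F y\<bar> = \<bar>Z y\<bar> / (norm y)^2" using eq[OF y] by (simp add: abs_div)
    also have "\<dots> \<le> K / (norm y)^2" using K(2)[OF y] by (intro divide_right_mono) auto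
    finally show "\<bar>F y\<bar> \<le> K / (norm y)^2" .
  qed
qed

theorem corollary5p1:
  fixes dpsi :: "nat \<Rightarrow> real \<Rightarrow> real"
    and u :: "real^'n \<Rightarrow> real"
  assumes N5: "CARD('n) \<ge> 5"
    and smooth: "smooth_halfline dpsi"
    and nonneg: "\<forall>r\<ge>0. dpsi 0 r \<ge> 0"
    and pos: "\<forall>r>0. dpsi 0 r > 0"
    and d1: "dpsi 1 0 = 1"
    and even: "\<forall>k. dpsi (2 * k) 0 = 0"
    and Krad: "\<forall>r>0. - dpsi 2 r / dpsi 0 r \<le> -1"
    and Ktan: "\<forall>r>0. - dpsi 2 r / dpsi 0 r \<ge> - ((dpsi 1 r)\<^sup>2 - 1) / (dpsi 0 r)\<^sup>2"
    and u: "cinf_c u"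
  shows "int_g dpsi (\<lambda>x. (rad_lap dpsi u x)\<^sup>2)
           - ((real CARD('n) - 1) / 2) ^ 4 * int_g dpsi (\<lambda>x. (u x)\<^sup>2)
         \<ge> (real CARD('n) - 1)\<^sup>2 / 16 * int_g dpsi (\<lambda>x. (u x)\<^sup>2 / (norm x)\<^sup>2)
           + (real CARD('n) - 1) ^ 3 * (real CARD('n) - 3) / 16
               * int_g dpsi (\<lambda>x. (u x)\<^sup>2 / (dpsi 0 (norm x))\<^sup>2)
           + 1 / 4 * int_g dpsi (\<lambda>x. (rad_d1 u x)\<^sup>2 / (norm x)\<^sup>2)
           + ((real CARD('n))\<^sup>2 - 1) / 4
               * int_g dpsi (\<lambda>x. (rad_d1 u x)\<^sup>2 / (dpsi 0 (norm x))\<^sup>2)"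
proof -
  interpret P: psi_model dpsi using smooth pos d1 even Krad Ktan by unfold_locales
  interpret U: u_fun u using u by unfold_locales
  define m where "m = CARD('n) - 1"
  have m4: "m \<ge> 4" unfolding m_def using N5 by simp
  have N3: "CARD('n) \<ge> 3" using N5 by simp
  obtain R B where R: "R > 0" and B: "B \<ge> 0"
    and Usupp: "\<And>y. norm y > R \<Longrightarrow> u y = 0 \<and> rad_d1 u y = 0 \<and> rad_d2 u y = 0"
    and Ubnd: "\<And>y. \<bar>u y\<bar> \<le> B \<and> \<bar>rad_d1 u y\<bar> \<le> B \<and> \<bar>rad_d2 u y\<bar> \<le> B"
    using U.ubounds by blast
  obtain M where M1: "M \<ge> 1"
    and Mb: "\<And>t. 0 \<le> t \<Longrightarrow> t \<le> R \<Longrightarrow> \<bar>dpsi 1 t\<bar> \<le> M \<and> \<bar>dpsi 2 t\<bar> \<le> M \<and> dpsi 0 t \<le> M * t"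
    using P.bounds[OF R] by blast
  define A where "A = (\<lambda>r. real m/2 * dpsi 1 r * dpsi 0 r^(m-1))"
  define A' where "A' = (\<lambda>r. (real m/2)*(dpsi 2 r * dpsi 0 r^(m-1) + (real m - 1)*(dpsi 1 r)^2*dpsi 0 r^(m-2)))"
  define Bq where "Bq = (\<lambda>r. dpsi 0 r^m/(2*r))"
  define Bq' where "Bq' = (\<lambda>r. real m * dpsi 1 r * dpsi 0 r^(m-1)/(2*r) - dpsi 0 r^m/(2*r^2))"
  define al where "al = (\<lambda>r. A r + Bq r)"
  define al' where "al' = (\<lambda>r. A' r + Bq' r)"
  define be where "be = (\<lambda>r. -(real m^2/4)*(A r - Bq r))"
  define be' where "be' = (\<lambda>r. -(real m^2/4)*(A' r - Bq' r))"
  define G where "G = (\<lambda>y. al (norm y) * (rad_d1 u y)^2 + be (norm y) * (u y)^2)"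
  define D where "D = (\<lambda>y. al' (norm y) * (rad_d1 u y)^2 + 2 * al (norm y) * rad_d1 u y * rad_d2 u y
                          + be' (norm y) * (u y)^2 + 2 * be (norm y) * u y * rad_d1 u y)"
  define Wt where "Wt = (\<lambda>y::real^'n. (dpsi 0 (norm y) / norm y) ^ (CARD('n) - 1))"
  have [measurable]: "G \<in> borel_measurable borel" "D \<in> borel_measurable borel" "Wt \<in> borel_measurable borel"
    unfolding G_def D_def al_def be_def al'_def be'_def A_def A'_def Bq_def Bq'_def Wt_def by measurable
  have R0: "R \<ge> 0" using R by simp
  have ob0: "Ob R 1 (\<lambda>y::real^'n. dpsi 0 (norm y))"
  proof (rule ObI[of M])
    show "M \<ge> 0" using M1 by simp
    fix y :: "real^'n" assume y: "y \<noteq> 0" "norm y \<le> R"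
    have "dpsi 0 (norm y) \<ge> 0" using P.p0ge[of "norm y"] norm_ge_zero[of y] by linarith
    then show "\<bar>dpsi 0 (norm y)\<bar> \<le> M * norm y ^ 1" using Mb[of "norm y"] y by simp
  qed
  have ob1: "Ob R 0 (\<lambda>y::real^'n. dpsi 1 (norm y))"
    by (rule ob_bdd[of M]) (use M1 Mb in auto)
  have ob2: "Ob R 0 (\<lambda>y::real^'n. dpsi 2 (norm y))"
    by (rule ob_bdd[of M]) (use M1 Mb in auto)
  have obu: "Ob R 0 u" by (rule ob_bdd[of B]) (use B Ubnd in auto)
  have obb: "Ob R 0 (rad_d1 u)" by (rule ob_bdd[of B]) (use B Ubnd in auto)
  have obc: "Ob R 0 (rad_d2 u)" by (rule ob_bdd[of B]) (use B Ubnd in auto)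
  have obA: "Ob R (m-1) (\<lambda>y::real^'n. A (norm y))"
  proof -
    have "Ob R (0 + 1*(m-1)) (\<lambda>y::real^'n. dpsi 1 (norm y) * dpsi 0 (norm y)^(m-1))"
      by (rule ob_mult[OF ob1 ob_pow[OF ob0]])
    then have "Ob R (m-1) (\<lambda>y::real^'n. real m/2 * (dpsi 1 (norm y) * dpsi 0 (norm y)^(m-1)))"
      by (intro ob_cmult) simp
    then show ?thesis by (rule ob_ext) (simp add: A_def mult.assoc)
  qed
  have obBq: "Ob R (m-1) (\<lambda>y::real^'n. Bq (norm y))"
  proof -
    have "Ob R (Suc (m-1)) (\<lambda>y::real^'n. dpsi 0 (norm y)^m)"
      by (rule ob_weaken[OF ob_pow[OF ob0] _ R0]) (use m4 in simp)
    then have "Ob R (m-1) (\<lambda>y::real^'n. 1/2 * (dpsi 0 (norm y)^m / norm y))"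
      by (intro ob_cmult ob_div)
    then show ?thesis by (rule ob_ext) (simp add: Bq_def)
  qed
  have obA': "Ob R (m-2) (\<lambda>y::real^'n. A' (norm y))"
  proof -
    have t1: "Ob R (m-2) (\<lambda>y::real^'n. dpsi 2 (norm y) * dpsi 0 (norm y)^(m-1))"
      by (rule ob_weaken[OF ob_mult[OF ob2 ob_pow[OF ob0]] _ R0]) simp
    have t2: "Ob R (m-2) (\<lambda>y::real^'n. (dpsi 1 (norm y))^2 * dpsi 0 (norm y)^(m-2))"
      by (rule ob_weaken[OF ob_mult[OF ob_pow[OF ob1] ob_pow[OF ob0]] _ R0]) simp
    have "Ob R (m-2) (\<lambda>y::real^'n. (real m/2) * (dpsi 2 (norm y) * dpsi 0 (norm y)^(m-1)
            + (real m - 1) * ((dpsi 1 (norm y))^2 * dpsi 0 (norm y)^(m-2))))"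
      by (intro ob_cmult ob_add t1 t2)
    then show ?thesis by (rule ob_ext) (simp add: A'_def mult.assoc)
  qed
  have obBq': "Ob R (m-2) (\<lambda>y::real^'n. Bq' (norm y))"
  proof -
    have t1: "Ob R (Suc (m-2)) (\<lambda>y::real^'n. dpsi 1 (norm y) * dpsi 0 (norm y)^(m-1))"
      by (rule ob_weaken[OF ob_mult[OF ob1 ob_pow[OF ob0]] _ R0]) (use m4 in simp)
    have t2: "Ob R (Suc (Suc (m-2))) (\<lambda>y::real^'n. dpsi 0 (norm y)^m)"
      by (rule ob_weaken[OF ob_pow[OF ob0] _ R0]) (use m4 in simp)
    have "Ob R (m-2) (\<lambda>y::real^'n. real m / 2 * (dpsi 1 (norm y) * dpsi 0 (norm y)^(m-1) / norm y)
             - 1/2 * (dpsi 0 (norm y)^m / norm y / norm y))"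
      by (intro ob_diff ob_cmult ob_div t1 t2)
    then show ?thesis by (rule ob_ext) (simp add: Bq'_def power2_eq_square field_simps)
  qed
  have obal: "Ob R (m-1) (\<lambda>y::real^'n. al (norm y))"
    unfolding al_def by (rule ob_add[OF obA obBq])
  have obbe: "Ob R (m-1) (\<lambda>y::real^'n. be (norm y))"
    unfolding be_def by (rule ob_cmult[OF ob_diff[OF obA obBq]])
  have obal': "Ob R (m-2) (\<lambda>y::real^'n. al' (norm y))"
    unfolding al'_def by (rule ob_add[OF obA' obBq'])
  have obbe': "Ob R (m-2) (\<lambda>y::real^'n. be' (norm y))"
    unfolding be'_def by (rule ob_cmult[OF ob_diff[OF obA' obBq']])
  have obal2: "Ob R (m-2) (\<lambda>y::real^'n. al (norm y))" by (rule ob_weaken[OF obal _ R0]) simp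
  have obbe2: "Ob R (m-2) (\<lambda>y::real^'n. be (norm y))" by (rule ob_weaken[OF obbe _ R0]) simp
  have obG: "Ob R (m-1) G"
  proof -
    have "Ob R (m-1) (\<lambda>y. al (norm y) * (rad_d1 u y)^2 + be (norm y) * (u y)^2)"
      by (intro ob_add ob_weaken[OF ob_mult[OF obal ob_pow[OF obb]] _ R0]
            ob_weaken[OF ob_mult[OF obbe ob_pow[OF obu]] _ R0]) simp_all
    then show ?thesis unfolding G_def .
  qed
  have obD: "Ob R (m-2) D"
  proof -
    have a: "Ob R (m-2) (\<lambda>y. al' (norm y) * (rad_d1 u y)^2)"
      by (rule ob_weaken[OF ob_mult[OF obal' ob_pow[OF obb]] _ R0]) simp
    have b: "Ob R (m-2) (\<lambda>y. 2 * (al (norm y) * (rad_d1 u y * rad_d2 u y)))"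
      by (rule ob_cmult, rule ob_weaken[OF ob_mult[OF obal2 ob_mult[OF obb obc]] _ R0]) simp
    have c: "Ob R (m-2) (\<lambda>y. be' (norm y) * (u y)^2)"
      by (rule ob_weaken[OF ob_mult[OF obbe' ob_pow[OF obu]] _ R0]) simp
    have d: "Ob R (m-2) (\<lambda>y. 2 * (be (norm y) * (u y * rad_d1 u y)))"
      by (rule ob_cmult, rule ob_weaken[OF ob_mult[OF obbe2 ob_mult[OF obu obb]] _ R0]) simp
    have "Ob R (m-2) (\<lambda>y. al' (norm y) * (rad_d1 u y)^2 + 2 * (al (norm y) * (rad_d1 u y * rad_d2 u y))
            + be' (norm y) * (u y)^2 + 2 * (be (norm y) * (u y * rad_d1 u y)))"
      by (intro ob_add a b c d)
    then show ?thesis by (rule ob_ext) (simp add: D_def mult.assoc)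
  qed
  obtain KG where KG: "KG \<ge> 0" "\<And>y::real^'n. y \<noteq> 0 \<Longrightarrow> norm y \<le> R \<Longrightarrow> \<bar>G y\<bar> \<le> KG * norm y^(m-1)"
    using ObE[OF obG] by blast
  obtain KD where KD: "KD \<ge> 0" "\<And>y::real^'n. y \<noteq> 0 \<Longrightarrow> norm y \<le> R \<Longrightarrow> \<bar>D y\<bar> \<le> KD * norm y^(m-2)"
    using ObE[OF obD] by blast
  define C where "C = max KG KD"
  have C0: "C \<ge> 0" unfolding C_def using KG by simp
  have GDsupp: "\<And>y. norm y > R \<Longrightarrow> G y = 0 \<and> D y = 0" using Usupp unfolding G_def D_def by simp
  have Gb: "\<bar>G y\<bar> \<le> C * norm y ^ (CARD('n) - 2)" if y: "y \<noteq> 0" for y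
  proof (cases "norm y \<le> R")
    case True
    have "\<bar>G y\<bar> \<le> KG * norm y^(m-1)" using KG(2)[OF y True] .
    also have "\<dots> \<le> C * norm y^(m-1)" unfolding C_def by (intro mult_right_mono) auto
    finally show ?thesis unfolding m_def by (simp add: numeral_2_eq_2)
  next
    case False then show ?thesis using GDsupp[of y] C0 by simp
  qed
  have Db: "\<bar>D y\<bar> \<le> C * norm y ^ (CARD('n) - 3)" if y: "y \<noteq> 0" for y
  proof (cases "norm y \<le> R")
    case True
    have "\<bar>D y\<bar> \<le> KD * norm y^(m-2)" using KD(2)[OF y True] .
    also have "\<dots> \<le> C * norm y^(m-2)" unfolding C_def by (intro mult_right_mono) auto
    finally show ?thesis unfolding m_def by (simp add: numeral_3_eq_3 numeral_2_eq_2)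
  next
    case False then show ?thesis using GDsupp[of y] C0 by simp
  qed
  have dd0: "(dpsi 0 has_real_derivative dpsi 1 s) (at s)" if "s > 0" for s
    using P.dat[OF that, of 0] by simp
  have dd1: "(dpsi 1 has_real_derivative dpsi 2 s) (at s)" if "s > 0" for s
    using P.dat[OF that, of 1] by (simp add: numeral_2_eq_2)
  have der: "((\<lambda>s. G (s *\<^sub>R sgn y)) has_real_derivative D (t *\<^sub>R sgn y)) (at t)"
    if y: "y \<noteq> 0" and t: "t > 0" for y :: "real^'n" and t :: real
  proof -
    define e where "e = sgn y"
    have ne: "norm e = 1" unfolding e_def using y by (simp add: norm_sgn)
    have Ad: "(A has_real_derivative A' t) (at t)"
      unfolding A_def A'_def by (rule A_deriv[where ?f0.0="dpsi 0" and ?f1.0="dpsi 1" and ?f2.0="dpsi 2" and r=t and m=m, OF dd0[OF t] dd1[OF t]]) (use m4 in simp)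
    have Bd: "(Bq has_real_derivative Bq' t) (at t)"
      unfolding Bq_def Bq'_def by (rule B_deriv[where ?f0.0="dpsi 0" and ?f1.0="dpsi 1" and r=t and m=m, OF dd0[OF t] t]) (use m4 in simp)
    have ald: "(al has_real_derivative al' t) (at t)"
      unfolding al_def al'_def by (rule DERIV_add[OF Ad Bd])
    have bed: "(be has_real_derivative be' t) (at t)"
      unfolding be_def be'_def by (rule DERIV_cmult[OF DERIV_diff[OF Ad Bd]])
    define \<phi> where "\<phi> = (\<lambda>s. al s * (U.d1 e s)^2 + be s * (u (s *\<^sub>R e))^2)"
    have \<phi>d: "(\<phi> has_real_derivative (al' t * (U.d1 e t)^2 + al t * (2 * U.d1 e t * U.d2 e t)
                 + (be' t * (u (t *\<^sub>R e))^2 + be t * (2 * u (t *\<^sub>R e) * U.d1 e t)))) (at t)"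
    proof -
      have p1: "((\<lambda>s. (U.d1 e s)^2) has_real_derivative 2 * U.d1 e t * U.d2 e t) (at t)"
        using DERIV_mult[OF U.d1_deriv[of e t] U.d1_deriv[of e t]] by (simp add: power2_eq_square mult_ac)
      have p2: "((\<lambda>s. (u (s *\<^sub>R e))^2) has_real_derivative 2 * u (t *\<^sub>R e) * U.d1 e t) (at t)"
        using DERIV_mult[OF U.f_deriv[of e t] U.f_deriv[of e t]] by (simp add: power2_eq_square mult_ac)
      show ?thesis unfolding \<phi>_def
        by (rule DERIV_cong[OF DERIV_add[OF DERIV_mult[OF ald p1] DERIV_mult[OF bed p2]]]) (simp add: algebra_simps)
    qed
    have eq\<phi>: "\<phi> s = G (s *\<^sub>R sgn y)" if "s \<in> {0<..}" for s
    proof -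
      have s: "s > 0" using that by simp
      have "norm (s *\<^sub>R e) = s" using s ne by simp
      then show ?thesis unfolding \<phi>_def G_def e_def[symmetric] using U.ray_facts(2)[OF s ne] by simp
    qed
    have "((\<lambda>s. G (s *\<^sub>R sgn y)) has_real_derivative (al' t * (U.d1 e t)^2 + al t * (2 * U.d1 e t * U.d2 e t)
                 + (be' t * (u (t *\<^sub>R e))^2 + be t * (2 * u (t *\<^sub>R e) * U.d1 e t)))) (at t)"
      by (rule has_field_derivative_transform_within_open[OF \<phi>d open_greaterThan _ eq\<phi>]) (use t in simp)
    moreover have "D (t *\<^sub>R sgn y) = al' t * (U.d1 e t)^2 + al t * (2 * U.d1 e t * U.d2 e t)
                 + (be' t * (u (t *\<^sub>R e))^2 + be t * (2 * u (t *\<^sub>R e) * U.d1 e t))"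
    proof -
      have "norm (t *\<^sub>R e) = t" using t ne by simp
      then show ?thesis unfolding D_def e_def[symmetric] using U.ray_facts(2,3)[OF t ne] by (simp add: algebra_simps)
    qed
    ultimately show ?thesis by simp
  qed
  have Eint: "integrable lborel (\<lambda>y. D y / norm y ^ (CARD('n) - 1))"
    and Ezero: "(\<integral>y. D y / norm y ^ (CARD('n) - 1) \<partial>lborel) = 0"
    using ray_div_zero[OF N3 R C0, of G D] der Gb Db GDsupp by auto
  have obW: "Ob R 0 Wt"
  proof (rule ob_bdd[of "M ^ (CARD('n) - 1)"])
    show "0 \<le> M ^ (CARD('n) - 1)" using M1 by simp
    fix y :: "real^'n" assume y: "y \<noteq> 0" "norm y \<le> R"
    have "0 \<le> dpsi 0 (norm y)" using P.p0ge[of "norm y"] norm_ge_zero[of y] by linarith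
    then have q0: "0 \<le> dpsi 0 (norm y) / norm y" by simp
    have "dpsi 0 (norm y) \<le> M * norm y" using Mb[of "norm y"] y by simp
    then have q1: "dpsi 0 (norm y) / norm y \<le> M" using y by (simp add: divide_le_eq)
    have "(dpsi 0 (norm y) / norm y) ^ (CARD('n) - 1) \<le> M ^ (CARD('n) - 1)"
      by (rule power_mono[OF q1 q0])
    then show "\<bar>Wt y\<bar> \<le> M ^ (CARD('n) - 1)" unfolding Wt_def using q0 by simp
  qed
  have obq: "Ob R 0 (\<lambda>y::real^'n. norm y / dpsi 0 (norm y))"
  proof (rule ob_bdd[of 1])
    fix y :: "real^'n" assume y: "y \<noteq> 0" "norm y \<le> R"
    have "norm y \<le> dpsi 0 (norm y)" using P.p0ge[of "norm y"] by simp
    moreover have "dpsi 0 (norm y) > 0" using P.ppos[of "norm y"] y by simp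
    ultimately show "\<bar>norm y / dpsi 0 (norm y)\<bar> \<le> 1" by (simp add: divide_le_eq)
  qed simp
  have obL: "Ob R 0 (\<lambda>y. norm y * rad_lap dpsi u y)"
  proof -
    have t1: "Ob R 0 (\<lambda>y. norm y * rad_d2 u y)" by (rule ob_weaken[OF ob_mult[OF ob_norm obc] _ R0]) simp
    have t2: "Ob R 0 (\<lambda>y. (real CARD('n) - 1) * (dpsi 1 (norm y) * (norm y / dpsi 0 (norm y)) * rad_d1 u y))"
      by (rule ob_cmult, rule ob_weaken[OF ob_mult[OF ob_mult[OF ob1 obq] obb] _ R0]) simp
    have "Ob R 0 (\<lambda>y. norm y * rad_d2 u y + (real CARD('n) - 1) * (dpsi 1 (norm y) * (norm y / dpsi 0 (norm y)) * rad_d1 u y))"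
      by (rule ob_add[OF t1 t2])
    then show ?thesis
    proof (rule ob_ext)
      fix y :: "real^'n" assume y: "y \<noteq> 0" "norm y \<le> R"
      have "dpsi 0 (norm y) > 0" using P.ppos[of "norm y"] y by simp
      then show "norm y * rad_lap dpsi u y = norm y * rad_d2 u y + (real CARD('n) - 1) * (dpsi 1 (norm y) * (norm y / dpsi 0 (norm y)) * rad_d1 u y)"
        unfolding rad_lap_def by (simp add: field_simps)
    qed
  qed
  have [measurable]: "(\<lambda>y. rad_lap dpsi u y) \<in> borel_measurable borel"
    unfolding rad_lap_def by measurable
  have intL: "integrable lborel (\<lambda>y. (rad_lap dpsi u y)^2 * Wt y)"
  proof (rule int_ob[OF N3 R _ ob_weaken[OF ob_mult[OF ob_pow[OF obL] obW] _ R0]])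
    show "(\<lambda>y. (rad_lap dpsi u y)^2 * Wt y) \<in> borel_measurable borel" by measurable
    fix y :: "real^'n"
    show "y \<noteq> 0 \<Longrightarrow> norm y \<le> R \<Longrightarrow> (rad_lap dpsi u y)^2 * Wt y = (norm y * rad_lap dpsi u y)^2 * Wt y / (norm y)^2"
      by (simp add: power_mult_distrib)
    show "norm y > R \<Longrightarrow> (rad_lap dpsi u y)^2 * Wt y = 0" using Usupp[of y] unfolding rad_lap_def by simp
  qed simp_all
  have int0: "integrable lborel (\<lambda>y. (u y)^2 * Wt y)"
  proof (rule int_ob[OF N3 R _ ob_weaken[OF ob_mult[OF ob_pow[OF ob_weaken[where k=0, OF ob_mult[OF ob_norm obu] _ R0]] obW] _ R0]])
    show "(\<lambda>y. (u y)^2 * Wt y) \<in> borel_measurable borel" by measurable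
    fix y :: "real^'n"
    show "y \<noteq> 0 \<Longrightarrow> norm y \<le> R \<Longrightarrow> (u y)^2 * Wt y = (norm y * u y)^2 * Wt y / (norm y)^2"
      by (simp add: power_mult_distrib)
    show "norm y > R \<Longrightarrow> (u y)^2 * Wt y = 0" using Usupp[of y] by simp
  qed simp_all
  have int1: "integrable lborel (\<lambda>y. (u y)^2 / (norm y)^2 * Wt y)"
  proof (rule int_ob[OF N3 R _ ob_weaken[OF ob_mult[OF ob_pow[OF obu] obW] _ R0]])
    show "(\<lambda>y. (u y)^2 / (norm y)^2 * Wt y) \<in> borel_measurable borel" by measurable
    fix y :: "real^'n"
    show "y \<noteq> 0 \<Longrightarrow> norm y \<le> R \<Longrightarrow> (u y)^2 / (norm y)^2 * Wt y = (u y)^2 * Wt y / (norm y)^2"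
      by simp
    show "norm y > R \<Longrightarrow> (u y)^2 / (norm y)^2 * Wt y = 0" using Usupp[of y] by simp
  qed simp_all
  have int2: "integrable lborel (\<lambda>y. (u y)^2 / (dpsi 0 (norm y))^2 * Wt y)"
  proof (rule int_ob[OF N3 R _ ob_weaken[OF ob_mult[OF ob_pow[OF ob_weaken[where k=0, OF ob_mult[OF obq obu] _ R0]] obW] _ R0]])
    show "(\<lambda>y. (u y)^2 / (dpsi 0 (norm y))^2 * Wt y) \<in> borel_measurable borel" by measurable
    fix y :: "real^'n"
    show "y \<noteq> 0 \<Longrightarrow> norm y \<le> R \<Longrightarrow> (u y)^2 / (dpsi 0 (norm y))^2 * Wt y = (norm y / dpsi 0 (norm y) * u y)^2 * Wt y / (norm y)^2"
      by (simp add: power_mult_distrib power_divide)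
    show "norm y > R \<Longrightarrow> (u y)^2 / (dpsi 0 (norm y))^2 * Wt y = 0" using Usupp[of y] by simp
  qed simp_all
  have int3: "integrable lborel (\<lambda>y. (rad_d1 u y)^2 / (norm y)^2 * Wt y)"
  proof (rule int_ob[OF N3 R _ ob_weaken[OF ob_mult[OF ob_pow[OF obb] obW] _ R0]])
    show "(\<lambda>y. (rad_d1 u y)^2 / (norm y)^2 * Wt y) \<in> borel_measurable borel" by measurable
    fix y :: "real^'n"
    show "y \<noteq> 0 \<Longrightarrow> norm y \<le> R \<Longrightarrow> (rad_d1 u y)^2 / (norm y)^2 * Wt y = (rad_d1 u y)^2 * Wt y / (norm y)^2"
      by simp
    show "norm y > R \<Longrightarrow> (rad_d1 u y)^2 / (norm y)^2 * Wt y = 0" using Usupp[of y] by simp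
  qed simp_all
  have int4: "integrable lborel (\<lambda>y. (rad_d1 u y)^2 / (dpsi 0 (norm y))^2 * Wt y)"
  proof (rule int_ob[OF N3 R _ ob_weaken[OF ob_mult[OF ob_pow[OF ob_weaken[where k=0, OF ob_mult[OF obq obb] _ R0]] obW] _ R0]])
    show "(\<lambda>y. (rad_d1 u y)^2 / (dpsi 0 (norm y))^2 * Wt y) \<in> borel_measurable borel" by measurable
    fix y :: "real^'n"
    show "y \<noteq> 0 \<Longrightarrow> norm y \<le> R \<Longrightarrow> (rad_d1 u y)^2 / (dpsi 0 (norm y))^2 * Wt y = (norm y / dpsi 0 (norm y) * rad_d1 u y)^2 * Wt y / (norm y)^2"
      by (simp add: power_mult_distrib power_divide)
    show "norm y > R \<Longrightarrow> (rad_d1 u y)^2 / (dpsi 0 (norm y))^2 * Wt y = 0" using Usupp[of y] by simp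
  qed simp_all
  define c0 where "c0 = ((real CARD('n) - 1) / 2) ^ 4"
  define c1 where "c1 = (real CARD('n) - 1)\<^sup>2 / 16"
  define c2 where "c2 = (real CARD('n) - 1) ^ 3 * (real CARD('n) - 3) / 16"
  define c3 where "c3 = (1::real) / 4"
  define c4 where "c4 = ((real CARD('n))\<^sup>2 - 1) / 4"
  have pw: "c0 * ((u y)^2 * Wt y) + c1 * ((u y)^2 / (norm y)^2 * Wt y)
      + c2 * ((u y)^2 / (dpsi 0 (norm y))^2 * Wt y) + c3 * ((rad_d1 u y)^2 / (norm y)^2 * Wt y)
      + c4 * ((rad_d1 u y)^2 / (dpsi 0 (norm y))^2 * Wt y) + D y / norm y ^ (CARD('n) - 1)
      \<le> (rad_lap dpsi u y)^2 * Wt y" for y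
  proof (cases "y = 0")
    case True
    have "CARD('n) - 1 \<noteq> 0" using N3 by simp
    then have W0: "Wt y = 0" unfolding Wt_def True by simp
    have E0: "D y / norm y ^ (CARD('n) - 1) = 0" using True \<open>CARD('n) - 1 \<noteq> 0\<close> by simp
    show ?thesis unfolding E0 W0 by simp
  next
    case False
    have r: "norm y > 0" using False by simp
    have p: "dpsi 0 (norm y) > 0" using P.ppos[OF r] .
    have h1: "dpsi 2 (norm y) \<ge> dpsi 0 (norm y)" using P.p2ge[OF r] .
    have h2: "dpsi 2 (norm y) * dpsi 0 (norm y) \<le> (dpsi 1 (norm y))^2 - 1" using P.p2tan[OF r] .
    note I = pw_ineq[where r="norm y" and p="dpsi 0 (norm y)" and ?p1.0="dpsi 1 (norm y)" and ?p2.0="dpsi 2 (norm y)"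
        and a="u y" and b="rad_d1 u y" and c="rad_d2 u y" and n="CARD('n)", OF r p N3 h1 h2]
    show ?thesis
      using I unfolding c0_def c1_def c2_def c3_def c4_def Wt_def rad_lap_def D_def al_def al'_def be_def be'_def
        A_def A'_def Bq_def Bq'_def m_def .
  qed
  have intS: "integrable lborel (\<lambda>y. c0 * ((u y)^2 * Wt y) + c1 * ((u y)^2 / (norm y)^2 * Wt y)
      + c2 * ((u y)^2 / (dpsi 0 (norm y))^2 * Wt y) + c3 * ((rad_d1 u y)^2 / (norm y)^2 * Wt y)
      + c4 * ((rad_d1 u y)^2 / (dpsi 0 (norm y))^2 * Wt y) + D y / norm y ^ (CARD('n) - 1))"
    by (intro Bochner_Integration.integrable_add integrable_mult_right int0 int1 int2 int3 int4 Eint)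
  have mono: "(\<integral>y. c0 * ((u y)^2 * Wt y) + c1 * ((u y)^2 / (norm y)^2 * Wt y)
      + c2 * ((u y)^2 / (dpsi 0 (norm y))^2 * Wt y) + c3 * ((rad_d1 u y)^2 / (norm y)^2 * Wt y)
      + c4 * ((rad_d1 u y)^2 / (dpsi 0 (norm y))^2 * Wt y) + D y / norm y ^ (CARD('n) - 1) \<partial>lborel)
      \<le> (\<integral>y. (rad_lap dpsi u y)^2 * Wt y \<partial>lborel)"
    by (rule integral_mono[OF intS intL pw])
  have split: "(\<integral>y. c0 * ((u y)^2 * Wt y) + c1 * ((u y)^2 / (norm y)^2 * Wt y)
      + c2 * ((u y)^2 / (dpsi 0 (norm y))^2 * Wt y) + c3 * ((rad_d1 u y)^2 / (norm y)^2 * Wt y)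
      + c4 * ((rad_d1 u y)^2 / (dpsi 0 (norm y))^2 * Wt y) + D y / norm y ^ (CARD('n) - 1) \<partial>lborel)
      = c0 * (\<integral>y. (u y)^2 * Wt y \<partial>lborel) + c1 * (\<integral>y. (u y)^2 / (norm y)^2 * Wt y \<partial>lborel)
      + c2 * (\<integral>y. (u y)^2 / (dpsi 0 (norm y))^2 * Wt y \<partial>lborel)
      + c3 * (\<integral>y. (rad_d1 u y)^2 / (norm y)^2 * Wt y \<partial>lborel)
      + c4 * (\<integral>y. (rad_d1 u y)^2 / (dpsi 0 (norm y))^2 * Wt y \<partial>lborel)
      + (\<integral>y. D y / norm y ^ (CARD('n) - 1) \<partial>lborel)"
    apply (subst Bochner_Integration.integral_add,
        (intro Bochner_Integration.integrable_add integrable_mult_right int0 int1 int2 int3 int4 Eint)+)+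
    apply (simp only: integral_mult_right_zero)
    done
  have ig: "int_g dpsi F = (\<integral>y. F y * Wt y \<partial>lborel)" for F
    unfolding int_g_def Wt_def ..
  show ?thesis
    using mono unfolding split Ezero ig c0_def[symmetric] c1_def[symmetric] c2_def[symmetric]
      c3_def[symmetric] c4_def[symmetric]
    by (simp add: c3_def)
qed

end
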